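(* Let $s,r,u\in \mathcal{X}$ lie in pairwise different orbits. Then there exists $F\in \mathrm{TA}_n(\mathbb{F}_q)$ such that $F([r])=[s]$ and $F([u])=[u]$. (Hence the induced action of $\mathrm{TA}_n(\mathbb{F}_q)$ on the set of orbits of size $m$ is 2-transitive.)
   Context: Fix $m$, a prime power $q$, $n\geq 3$. $\Delta=\mathrm{Gal}(\mathbb{F}_{q^m}:\mathbb{F}_q)$ acts coordinatewise on $\mathbb{F}_{q^m}^n$; $[v]$ denotes the $\Delta$-orbit of $v$, and $\mathcal{X}$ is the union of orbits of size $m$. $\mathrm{TA}_n(\mathbb{F}_q)$ is the tame automorphism group generated by invertible affine maps and triangular maps $(a_1X_1+f_1,\dots,a_nX_n+f_n)$, $a_i\in\mathbb{F}_q^*$, $f_i\in\mathbb{F}_q[X_{i+1},\dots,X_n]$. *)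

theory Defs
  imports "HOL-Computational_Algebra.Primes"
begin

text \<open>The ambient field is a finite field type 'a with CARD('a) = q^m, i.e. F_(q^m).  Points of F_(q^m)^n are
  functions nat => 'a that vanish at indices >= n (coordinates X_0..X_(n-1)).\<close>

definition Fq :: "nat \<Rightarrow> 'a::{field,finite} set" where
  "Fq q = {x. x ^ q = x}"

definition points :: "nat \<Rightarrow> (nat \<Rightarrow> 'a::zero) set" where
  "points n = {v. \<forall>i\<ge>n. v i = 0}"

definition frob_vec :: "nat \<Rightarrow> nat \<Rightarrow> (nat \<Rightarrow> 'a::{field,finite}) \<Rightarrow> (nat \<Rightarrow> 'a)" where
  "frob_vec q k v = (\<lambda>i. v i ^ (q ^ k))"

definition orbit :: "nat \<Rightarrow> nat \<Rightarrow> (nat \<Rightarrow> 'a::{field,finite}) \<Rightarrow> (nat \<Rightarrow> 'a) set" where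
  "orbit q m v = {frob_vec q k v | k. k < m}"

definition bigX :: "nat \<Rightarrow> nat \<Rightarrow> nat \<Rightarrow> (nat \<Rightarrow> 'a::{field,finite}) set" where
  "bigX q m n = {v \<in> points n. card (orbit q m v) = m}"

inductive fq_poly :: "nat \<Rightarrow> nat set \<Rightarrow> ((nat \<Rightarrow> 'a::{field,finite}) \<Rightarrow> 'a) \<Rightarrow> bool"
  for q :: nat and S :: "nat set" where
  const: "c \<in> Fq q \<Longrightarrow> fq_poly q S (\<lambda>v. c)"
| var: "i \<in> S \<Longrightarrow> fq_poly q S (\<lambda>v. v i)"
| add: "fq_poly q S f \<Longrightarrow> fq_poly q S g \<Longrightarrow> fq_poly q S (\<lambda>v. f v + g v)"
| mult: "fq_poly q S f \<Longrightarrow> fq_poly q S g \<Longrightarrow> fq_poly q S (\<lambda>v. f v * g v)"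

definition affine_maps :: "nat \<Rightarrow> nat \<Rightarrow> ((nat \<Rightarrow> 'a::{field,finite}) \<Rightarrow> (nat \<Rightarrow> 'a)) set" where
  "affine_maps q n = {F. \<exists>A b B.
      (\<forall>i<n. \<forall>j<n. A i j \<in> Fq q \<and> B i j \<in> Fq q) \<and> (\<forall>i<n. b i \<in> Fq q) \<and>
      (\<forall>i<n. \<forall>j<n. (\<Sum>k<n. B i k * A k j) = (if i = j then 1 else 0)) \<and>
      F = (\<lambda>v i. if i < n then (\<Sum>j<n. A i j * v j) + b i else 0)}"

definition triangular_maps :: "nat \<Rightarrow> nat \<Rightarrow> ((nat \<Rightarrow> 'a::{field,finite}) \<Rightarrow> (nat \<Rightarrow> 'a)) set" where
  "triangular_maps q n = {F. \<exists>a f.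
      (\<forall>i<n. a i \<in> Fq q \<and> a i \<noteq> 0 \<and> fq_poly q {i+1..<n} (f i)) \<and>
      F = (\<lambda>v i. if i < n then a i * v i + f i v else 0)}"

text \<open>TA_n(F_q) (acting on F_(q^m)^n): generated under composition by affine and
  triangular maps; both generating sets are closed under inversion, so the generated
  monoid is the generated group.\<close>
inductive_set tame :: "nat \<Rightarrow> nat \<Rightarrow> ((nat \<Rightarrow> 'a::{field,finite}) \<Rightarrow> (nat \<Rightarrow> 'a)) set"
  for q :: nat and n :: nat where
  aff: "F \<in> affine_maps q n \<Longrightarrow> F \<in> tame q n"
| tri: "F \<in> triangular_maps q n \<Longrightarrow> F \<in> tame q n"
| comp: "F \<in> tame q n \<Longrightarrow> G \<in> tame q n \<Longrightarrow> F \<circ> G \<in> tame q n"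

end

theory Submission
  imports Defs "HOL-Number_Theory.Residues" "HOL-Computational_Algebra.Polynomial"
begin

definition fr :: "nat \<Rightarrow> nat \<Rightarrow> 'a::{field,finite} \<Rightarrow> 'a" where
  "fr q k z = z ^ (q ^ k)"

lemma card_power_same:
  fixes x :: "'a :: {field,finite}"
  shows "x ^ card (UNIV :: 'a set) = x"
proof (cases "x = 0")
  case False
  have "x * (\<Prod>y\<in>UNIV-{0}. x * y) = x * x ^ (card (UNIV :: 'a set) - 1) * \<Prod>(UNIV-{0})"
    by (simp add: prod.distrib mult_ac)
  also have "x * x ^ (card (UNIV :: 'a set) - 1) = x ^ Suc (card (UNIV :: 'a set) - 1)"
    by (subst power_Suc) auto
  also have "Suc (card (UNIV :: 'a set) - 1) = card (UNIV :: 'a set)"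
    using finite_UNIV_card_ge_0[where ?'a = 'a] by simp
  also have "(\<Prod>y\<in>UNIV-{0}. x * y) = (\<Prod>y\<in>UNIV-{0}. y)"
    by (rule prod.reindex_bij_witness[of _ "\<lambda>y. y / x" "\<lambda>y. x * y"]) (use False in auto)
  finally show ?thesis
    by simp
qed (use finite_UNIV_card_ge_0[where ?'a = 'a] in auto)

locale FF =
  fixes q m :: nat and ty :: "'a::{field,finite} itself"
  assumes qpp: "\<exists>p k. prime p \<and> k > 0 \<and> q = p ^ k"
    and m1: "m \<ge> 1"
    and cardF: "card (UNIV :: 'a set) = q ^ m"
begin

lemma q_ge2: "q \<ge> 2"
proof -
  obtain p k where p: "prime p" "k > 0" "q = p ^ k" using qpp by blast
  have "p \<ge> 2" using p(1) prime_ge_2_nat by blast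
  hence "p ^ k \<ge> p" using p(2) by (simp add: self_le_power)
  thus ?thesis using p \<open>p \<ge> 2\<close> by simp
qed

lemma CHAR_q: "\<exists>k. q = CHAR('a) ^ k"
proof -
  obtain p k where p: "prime p" "k > 0" "q = p ^ k" using qpp by blast
  have cpos: "CHAR('a) > 0" by (simp add: finite_imp_CHAR_pos)
  have pc: "prime CHAR('a)" using prime_CHAR_semidom[OF cpos] .
  have "CHAR('a) dvd card (UNIV :: 'a set)" by (rule CHAR_dvd_CARD)
  hence "CHAR('a) dvd p ^ (k * m)" using cardF p by (simp add: power_mult)
  hence "CHAR('a) dvd p" using pc prime_dvd_power by blast
  hence "CHAR('a) = p" using pc p(1) primes_dvd_imp_eq by blast
  thus ?thesis using p by blast
qed

lemma fresh_q: "(x + y :: 'a) ^ q = x ^ q + y ^ q"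
proof -
  obtain k where k: "q = CHAR('a) ^ k" using CHAR_q by blast
  have pc: "prime CHAR('a)" by (simp add: finite_imp_CHAR_pos prime_CHAR_semidom)
  show ?thesis by (rule freshmans_dream'[OF pc k])
qed

lemma fr_add: "fr q k (x + y) = fr q k x + fr q k (y::'a)"
proof (induction k)
  case 0 then show ?case by (simp add: fr_def)
next
  case (Suc k)
  have h: "fr q (Suc k) z = (fr q k z) ^ q" for z :: 'a
  proof -
    have "z ^ (q ^ Suc k) = z ^ (q ^ k * q)" by (simp add: mult.commute)
    thus ?thesis unfolding fr_def by (simp only: power_mult)
  qed
  show ?case by (simp only: h Suc.IH fresh_q)
qed

lemma fr_mult: "fr q k (x * y) = fr q k x * fr q k (y::'a)"
  by (simp add: fr_def power_mult_distrib)

lemma fr_0 [simp]: "fr q k (0::'a) = 0"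
  using q_ge2 by (simp add: fr_def)

lemma fr_1 [simp]: "fr q k (1::'a) = 1"
  by (simp add: fr_def)

lemma fr_zero_k [simp]: "fr q 0 x = x"
  by (simp add: fr_def)

lemma fr_comp: "fr q a (fr q b x) = fr q (a + b) (x::'a)"
  unfolding fr_def by (metis power_add power_mult mult.commute)

lemma fr_m: "fr q m (x::'a) = x"
  using card_power_same[of x] cardF by (simp add: fr_def)

lemma fr_mult_m: "fr q (m * j) (x::'a) = x"
proof (induction j)
  case 0 then show ?case by simp
next
  case (Suc j)
  have "fr q (m * Suc j) x = fr q m (fr q (m*j) x)" by (simp add: fr_comp add.commute)
  then show ?case using Suc fr_m by simp
qed

lemma fr_mod: "fr q k (x::'a) = fr q (k mod m) x"
proof -
  have "k = k mod m + m * (k div m)" by simp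
  hence "fr q k x = fr q (k mod m) (fr q (m * (k div m)) x)" by (metis fr_comp)
  thus ?thesis by (simp add: fr_mult_m)
qed

lemma fr_inj: assumes "fr q k x = fr q k (y::'a)" shows "x = y"
proof -
  have e: "m * k = (m * k - k) + k" using m1 by (metis le_add_diff_inverse2 mult_1 mult_le_mono1)
  have "fr q (m*k - k) (fr q k x) = fr q (m*k - k) (fr q k y)" using assms by simp
  thus ?thesis by (simp add: fr_comp flip: e add: fr_mult_m)
qed

lemma fr_uminus: "fr q k (- x) = - fr q k (x::'a)"
proof -
  have "fr q k (-x) + fr q k x = 0" by (simp flip: fr_add)
  thus ?thesis by (simp add: eq_neg_iff_add_eq_0)
qed

lemma fr_diff: "fr q k (x - y) = fr q k x - fr q k (y::'a)"
  by (metis diff_conv_add_uminus fr_add fr_uminus)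

lemma fr_sum: "finite A \<Longrightarrow> fr q k (\<Sum>i\<in>A. g i) = (\<Sum>i\<in>A. fr q k (g i :: 'a))"
  by (induction A rule: finite_induct) (simp_all add: fr_add)

lemma fr_prod: "fr q k (\<Prod>i\<in>A. g i) = (\<Prod>i\<in>A. fr q k (g i :: 'a))"
  by (simp add: fr_def prod_power_distrib)

lemma fr_power: "fr q k (x ^ N) = fr q k (x::'a) ^ N"
  by (simp add: fr_def flip: power_mult) (simp add: mult.commute)

lemma Fq_fr: "c \<in> Fq q \<Longrightarrow> fr q k (c::'a) = c"
proof (induction k)
  case 0 then show ?case by simp
next
  case (Suc k)
  have "fr q (Suc k) c = fr q k (fr q 1 c)" by (simp add: fr_comp)
  also have "fr q 1 c = c" using Suc.prems by (simp add: Fq_def fr_def)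
  finally show ?case using Suc by simp
qed

lemma Fq_iff: "c \<in> Fq q \<longleftrightarrow> fr q 1 (c::'a) = c"
  by (simp add: Fq_def fr_def)

end

inductive spanp :: "nat \<Rightarrow> nat set \<Rightarrow> ((nat \<Rightarrow> 'a::{field,finite}) \<Rightarrow> 'a) \<Rightarrow> bool"
  for q :: nat and S :: "nat set" where
  sc: "fq_poly q S g \<Longrightarrow> spanp q S (\<lambda>v. c * g v)"
| sadd: "spanp q S h1 \<Longrightarrow> spanp q S h2 \<Longrightarrow> spanp q S (\<lambda>v. h1 v + h2 v)"

definition Tr :: "nat \<Rightarrow> nat \<Rightarrow> ((nat \<Rightarrow> 'a::{field,finite}) \<Rightarrow> 'a) \<Rightarrow> (nat \<Rightarrow> 'a) \<Rightarrow> 'a" where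
  "Tr q m h v = (\<Sum>k<m. fr q k (h (frob_vec q (m - k) v)))"

definition delta :: "nat set \<Rightarrow> (nat \<Rightarrow> 'a::{field,finite}) \<Rightarrow> (nat \<Rightarrow> 'a) \<Rightarrow> 'a" where
  "delta S w v = (\<Prod>i\<in>S. 1 - (v i - w i) ^ (card (UNIV :: 'a set) - 1))"

context FF
begin

lemma frob_fr: "frob_vec q k v i = fr q k ((v::nat \<Rightarrow> 'a) i)"
  by (simp add: frob_vec_def fr_def)

lemma frob_comp: "frob_vec q a (frob_vec q b v) = frob_vec q (a + b) (v::nat \<Rightarrow> 'a)"
  by (simp add: frob_fr fr_comp fun_eq_iff)

lemma frob_m: "frob_vec q m (v::nat \<Rightarrow> 'a) = v"
  by (simp add: frob_fr fr_m fun_eq_iff)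

lemma frob_0 [simp]: "frob_vec q 0 (v::nat \<Rightarrow> 'a) = v"
  by (simp add: frob_fr fun_eq_iff)

lemma frob_mod: "frob_vec q k (v::nat \<Rightarrow> 'a) = frob_vec q (k mod m) v"
  by (simp add: frob_fr fun_eq_iff flip: fr_mod)

lemma Fq_0 [simp]: "(0::'a) \<in> Fq q" by (simp add: Fq_iff)
lemma Fq_1 [simp]: "(1::'a) \<in> Fq q" by (simp add: Fq_iff)
lemma Fq_m1 [simp]: "(-1::'a) \<in> Fq q" by (simp add: Fq_iff fr_uminus)
lemma Fq_add: "a \<in> Fq q \<Longrightarrow> b \<in> Fq q \<Longrightarrow> (a + b::'a) \<in> Fq q" by (simp add: Fq_iff fr_add)
lemma Fq_mult: "a \<in> Fq q \<Longrightarrow> b \<in> Fq q \<Longrightarrow> (a * b::'a) \<in> Fq q" by (simp add: Fq_iff fr_mult)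

lemma fq_poly_equiv: "fq_poly q S f \<Longrightarrow> f (frob_vec q k v) = fr q k (f (v::nat \<Rightarrow> 'a))"
  by (induction rule: fq_poly.induct) (simp_all add: Fq_fr frob_fr fr_add fr_mult)

lemma fq_poly_local: "fq_poly q S f \<Longrightarrow> (\<forall>i\<in>S. v i = w i) \<Longrightarrow> f v = f (w::nat \<Rightarrow> 'a)"
  by (induction rule: fq_poly.induct) simp_all

lemma fq_poly_rename:
  "fq_poly q S f \<Longrightarrow> (\<forall>i\<in>S. \<sigma> i \<in> S') \<Longrightarrow> fq_poly q S' (\<lambda>v. f (\<lambda>i. (v::nat \<Rightarrow> 'a) (\<sigma> i)))"
proof (induction rule: fq_poly.induct)
  case (const c) then show ?case by (simp add: fq_poly.const)
next
  case (var i) then show ?case by (simp add: fq_poly.var)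
next
  case (add f g) then show ?case by (simp add: fq_poly.add)
next
  case (mult f g) then show ?case by (simp add: fq_poly.mult)
qed

lemma fq_poly_mono: "fq_poly q S f \<Longrightarrow> S \<subseteq> S' \<Longrightarrow> fq_poly q S' (f :: (nat \<Rightarrow> 'a) \<Rightarrow> 'a)"
  using fq_poly_rename[of S f id S'] by auto

lemma fq_poly_cmult: "c \<in> Fq q \<Longrightarrow> fq_poly q S f \<Longrightarrow> fq_poly q S (\<lambda>v. c * (f v :: 'a))"
  using fq_poly.mult[OF fq_poly.const] by blast

lemma fq_poly_neg: "fq_poly q S f \<Longrightarrow> fq_poly q S (\<lambda>v. - (f v :: 'a))"
  using fq_poly_cmult[OF Fq_m1] by simp

lemma fq_poly_sum: "finite A \<Longrightarrow> (\<And>a. a \<in> A \<Longrightarrow> fq_poly q S (g a)) \<Longrightarrow> fq_poly q S (\<lambda>v. \<Sum>a\<in>A. (g a v :: 'a))"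
proof (induction A rule: finite_induct)
  case empty then show ?case using fq_poly.const[OF Fq_0] by simp
next
  case (insert x F) then show ?case by (simp add: fq_poly.add)
qed

lemma spanp_fq: "fq_poly q S g \<Longrightarrow> spanp q S (g :: (nat \<Rightarrow> 'a) \<Rightarrow> 'a)"
  using spanp.sc[of q S g 1] by simp

lemma spanp_const: "spanp q S (\<lambda>v. c :: 'a)"
  using spanp.sc[of q S "\<lambda>v. 1" c] by (simp add: fq_poly.const)

lemma spanp_var: "i \<in> S \<Longrightarrow> spanp q S (\<lambda>v. v i :: 'a)"
  by (rule spanp_fq) (rule fq_poly.var)

lemma spanp_cmult: "spanp q S h \<Longrightarrow> spanp q S (\<lambda>v. c * (h v :: 'a))"
proof (induction rule: spanp.induct)
  case (sc g c') then show ?case using spanp.sc[of q S g "c * c'"] by (simp add: mult.assoc)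
next
  case (sadd h1 h2) then show ?case using spanp.sadd by (simp add: distrib_left)
qed

lemma spanp_mult_fq: "spanp q S h \<Longrightarrow> fq_poly q S g \<Longrightarrow> spanp q S (\<lambda>v. h v * (g v :: 'a))"
proof (induction rule: spanp.induct)
  case (sc g' c) then show ?case using spanp.sc[OF fq_poly.mult[of q S g' g], of c] by (simp add: mult.assoc)
next
  case (sadd h1 h2) then show ?case using spanp.sadd by (simp add: distrib_right)
qed

lemma spanp_mult: "spanp q S h \<Longrightarrow> spanp q S h' \<Longrightarrow> spanp q S (\<lambda>v. h v * (h' v :: 'a))"
proof (induction rule: spanp.induct)
  case (sc g c)
  have "spanp q S (\<lambda>v. h' v * g v)" using spanp_mult_fq[OF sc(2) sc(1)] .
  hence "spanp q S (\<lambda>v. c * (h' v * g v))" by (rule spanp_cmult)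
  then show ?case by (simp add: mult_ac)
next
  case (sadd h1 h2) then show ?case using spanp.sadd by (simp add: distrib_right)
qed

lemma spanp_add: "spanp q S h \<Longrightarrow> spanp q S h' \<Longrightarrow> spanp q S (\<lambda>v. h v + (h' v :: 'a))"
  by (rule spanp.sadd)

lemma spanp_power: "spanp q S h \<Longrightarrow> spanp q S (\<lambda>v. (h v :: 'a) ^ N)"
  by (induction N) (simp_all add: spanp_const spanp_mult)

lemma spanp_prod: "finite A \<Longrightarrow> (\<And>a. a \<in> A \<Longrightarrow> spanp q S (g a)) \<Longrightarrow> spanp q S (\<lambda>v. \<Prod>a\<in>A. (g a v :: 'a))"
proof (induction A rule: finite_induct)
  case empty then show ?case using spanp_const by simp
next
  case (insert x F) then show ?case by (simp add: spanp_mult)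
qed

lemma spanp_delta: "finite S \<Longrightarrow> spanp q S (delta S (w :: nat \<Rightarrow> 'a))"
  unfolding delta_def
proof (rule spanp_prod)
  fix i assume "i \<in> S"
  have "spanp q S (\<lambda>v. v i + (- w i))" by (rule spanp_add[OF spanp_var[OF \<open>i \<in> S\<close>] spanp_const])
  hence "spanp q S (\<lambda>v. (v i + (- w i)) ^ (card (UNIV :: 'a set) - 1))" by (rule spanp_power)
  hence "spanp q S (\<lambda>v. (-1) * (v i + (- w i)) ^ (card (UNIV :: 'a set) - 1))" by (rule spanp_cmult)
  hence "spanp q S (\<lambda>v. 1 + (-1) * (v i + (- w i)) ^ (card (UNIV :: 'a set) - 1))"
    by (rule spanp_add[OF spanp_const])
  thus "spanp q S (\<lambda>v. 1 - (v i - w i) ^ (card (UNIV :: 'a set) - 1))" by simp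
qed

lemma trace_Fq: "(\<Sum>k<m. fr q k (c::'a)) \<in> Fq q"
proof -
  have "fr q 1 (\<Sum>k<m. fr q k c) = (\<Sum>k<m. fr q (Suc k) c)"
    by (simp add: fr_sum fr_comp)
  also have "\<dots> = (\<Sum>k<m. fr q k c)"
  proof -
    have "(\<Sum>k<Suc m. fr q k c) = (\<Sum>k<m. fr q (Suc k) c) + fr q 0 c" by (rule sum.lessThan_Suc_shift[THEN trans]) simp
    moreover have "(\<Sum>k<Suc m. fr q k c) = (\<Sum>k<m. fr q k c) + fr q m c" by simp
    ultimately show ?thesis using fr_m by simp
  qed
  finally show ?thesis by (simp add: Fq_iff)
qed

lemma Tr_fq: "spanp q S h \<Longrightarrow> fq_poly q S (Tr q m (h :: (nat \<Rightarrow> 'a) \<Rightarrow> 'a))"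
proof (induction rule: spanp.induct)
  case (sc g c)
  have "Tr q m (\<lambda>v. c * g v) = (\<lambda>v. (\<Sum>k<m. fr q k c) * g v)"
  proof
    fix v :: "nat \<Rightarrow> 'a"
    have "Tr q m (\<lambda>v. c * g v) v = (\<Sum>k<m. fr q k c * fr q k (fr q (m - k) (g v)))"
      unfolding Tr_def using fq_poly_equiv[OF sc] by (simp add: fr_mult)
    also have "\<dots> = (\<Sum>k<m. fr q k c * g v)"
      by (rule sum.cong) (simp_all add: fr_comp fr_m)
    finally show "Tr q m (\<lambda>v. c * g v) v = (\<Sum>k<m. fr q k c) * g v" by (simp add: sum_distrib_right)
  qed
  then show ?case using fq_poly_cmult[OF trace_Fq sc] by simp
next
  case (sadd h1 h2)
  have "Tr q m (\<lambda>v. h1 v + h2 v) = (\<lambda>v. Tr q m h1 v + Tr q m h2 v)"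
    by (simp add: Tr_def fun_eq_iff fr_add sum.distrib)
  then show ?case using sadd by (simp add: fq_poly.add)
qed

lemma Q_ge2: "card (UNIV :: 'a set) \<ge> 2"
proof -
  have "q ^ m \<ge> q" using m1 q_ge2 by (simp add: self_le_power)
  thus ?thesis using cardF q_ge2 by simp
qed

lemma pow_Q1: "(z::'a) ^ (card (UNIV :: 'a set) - 1) = (if z = 0 then 0 else 1)"
proof (cases "z = 0")
  case True then show ?thesis using Q_ge2 by simp
next
  case False
  have "z * z ^ (card (UNIV :: 'a set) - 1) = z ^ card (UNIV :: 'a set)"
    using Q_ge2 by (metis Suc_diff_1 le_less_trans order_less_le_trans pos2 power_Suc)
  also have "\<dots> = z" by (rule card_power_same)
  finally show ?thesis using False by simp
qed

lemma delta_val: "finite S \<Longrightarrow> delta S w v = (if \<forall>i\<in>S. v i = w i then 1 else (0::'a))"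
proof (cases "\<forall>i\<in>S. v i = w i")
  case True
  have "(0::'a) ^ (card (UNIV :: 'a set) - 1) = 0" using Q_ge2 by simp
  hence "delta S w v = (\<Prod>i\<in>S. (1::'a))" unfolding delta_def
    by (intro prod.cong) (use True in auto)
  then show ?thesis using True by simp
next
  case False
  assume fin: "finite S"
  then obtain i where i: "i \<in> S" "v i \<noteq> w i" using False by blast
  have "(v i - w i) ^ (card (UNIV :: 'a set) - 1) = 1" using pow_Q1[of "v i - w i"] i by simp
  hence "\<exists>j\<in>S. 1 - (v j - w j) ^ (card (UNIV :: 'a set) - 1) = 0" using i by auto
  then show ?thesis using False fin by (simp add: delta_def prod_zero)
qed

end

definition E :: "nat \<Rightarrow> ((nat \<Rightarrow> 'a::{field,finite}) \<Rightarrow> 'a) \<Rightarrow> (nat \<Rightarrow> 'a) \<Rightarrow> (nat \<Rightarrow> 'a)" where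
  "E j f v = v(j := v j + f v)"

definition sw :: "nat \<Rightarrow> nat \<Rightarrow> nat" where
  "sw j i = (if i = 0 then j else if i = j then 0 else i)"

lemma sw_sw [simp]: "sw j (sw j i) = i"
  by (simp add: sw_def)

lemma sw_lt: "j < n \<Longrightarrow> i < n \<Longrightarrow> sw j i < n"
  by (simp add: sw_def)

lemma sum_single_nat:
  assumes "(k0::nat) < n" shows "(\<Sum>k<n. (if k0 = k then 1 else 0) * (g k :: 'b::field)) = g k0"
proof -
  have "(\<Sum>k<n. (if k0 = k then 1 else 0) * g k) = (\<Sum>k<n. if k0 = k then g k else 0)"
    by (rule sum.cong) auto
  also have "\<dots> = g k0" using assms by (subst sum.delta') auto
  finally show ?thesis .
qed

lemma sum_single_nat': 
  assumes "(k0::nat) < n" shows "(\<Sum>k<n. (if k0 = k then (1::'b::field) else 0)) = 1"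
  using sum_single_nat[OF assms, of "\<lambda>_. 1"] by simp

context FF
begin

lemma perm_affine:
  assumes j: "j < n"
  shows "(\<lambda>v i. if i < n then v (sw j i) else (0::'a)) \<in> affine_maps q n"
proof -
  define A where "A = (\<lambda>i k. if sw j i = k then (1::'a) else 0)"
  have Aq: "\<forall>i<n. \<forall>k<n. A i k \<in> Fq q \<and> A i k \<in> Fq q" by (simp add: A_def)
  have inv: "\<forall>i<n. \<forall>l<n. (\<Sum>k<n. A i k * A k l) = (if i = l then 1 else 0)"
  proof (intro allI impI)
    fix i l assume i: "i < n" and l: "l < n"
    have "(\<Sum>k<n. A i k * A k l) = A (sw j i) l"
      unfolding A_def by (rule sum_single_nat[OF sw_lt[OF j i]])
    also have "\<dots> = (if i = l then 1 else 0)" by (simp add: A_def)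
    finally show "(\<Sum>k<n. A i k * A k l) = (if i = l then 1 else 0)" .
  qed
  have F: "(\<lambda>v i. if i < n then v (sw j i) else 0) = (\<lambda>v i. if i < n then (\<Sum>k<n. A i k * v k) + 0 else 0)"
  proof (intro ext)
    fix v :: "nat \<Rightarrow> 'a" and i
    show "(if i < n then v (sw j i) else 0) = (if i < n then (\<Sum>k<n. A i k * v k) + 0 else 0)"
    proof (cases "i < n")
      case True
      have "(\<Sum>k<n. A i k * v k) = v (sw j i)"
        unfolding A_def by (rule sum_single_nat[OF sw_lt[OF j True]])
      then show ?thesis using True by simp
    qed simp
  qed
  have "\<exists>A' b B. (\<forall>i<n. \<forall>k<n. A' i k \<in> Fq q \<and> B i k \<in> Fq q) \<and> (\<forall>i<n. b i \<in> Fq q) \<and>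
      (\<forall>i<n. \<forall>l<n. (\<Sum>k<n. B i k * A' k l) = (if i = l then 1 else 0)) \<and>
      (\<lambda>v i. if i < n then v (sw j i) else (0::'a)) = (\<lambda>v i. if i < n then (\<Sum>k<n. A' i k * v k) + b i else 0)"
    by (rule exI[of _ A], rule exI[of _ "\<lambda>_. 0"], rule exI[of _ A]) (use Aq inv F in simp)
  then show ?thesis unfolding affine_maps_def mem_Collect_eq .
qed

lemma id_affine: "(\<lambda>v i. if i < n then v i else (0::'a)) \<in> affine_maps q n"
proof (cases "n = 0")
  case True
  have "\<exists>A' b B. (\<forall>i<n. \<forall>k<n. A' i k \<in> Fq q \<and> B i k \<in> Fq q) \<and> (\<forall>i<n. b i \<in> Fq q) \<and>
      (\<forall>i<n. \<forall>l<n. (\<Sum>k<n. B i k * A' k l) = (if i = l then 1 else 0)) \<and>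
      (\<lambda>v i. if i < n then v i else 0) = (\<lambda>v i. if i < n then (\<Sum>k<n. A' i k * v k) + b i else (0::'a))"
    using True by simp
  then show ?thesis unfolding affine_maps_def mem_Collect_eq .
next
  case False
  have "(\<lambda>v i. if i < n then v i else 0) = (\<lambda>v i. if i < n then v (sw 0 i) else (0::'a))"
    by (auto simp: sw_def fun_eq_iff)
  then show ?thesis using perm_affine[of 0 n] False by simp
qed

lemma E0_tri:
  assumes f: "fq_poly q {1..<n} f" and n: "0 < n"
  shows "(\<lambda>v i. if i < n then 1 * v i + (if i = 0 then f v else 0) else (0::'a)) \<in> triangular_maps q n"
proof -
  have "\<forall>i<n. (1::'a) \<in> Fq q \<and> (1::'a) \<noteq> 0 \<and> fq_poly q {i+1..<n} (\<lambda>v. if i = 0 then f v else 0)"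
  proof (intro allI impI conjI)
    fix i assume "i < n"
    show "fq_poly q {i+1..<n} (\<lambda>v. if i = 0 then f v else 0)"
    proof (cases "i = 0")
      case True then show ?thesis using f by simp
    next
      case False then show ?thesis by (simp add: fq_poly.const)
    qed
  qed simp_all
  hence "\<exists>a g. (\<forall>i<n. a i \<in> Fq q \<and> a i \<noteq> 0 \<and> fq_poly q {i+1..<n} (g i)) \<and>
     (\<lambda>v i. if i < n then 1 * v i + (if i = 0 then f v else 0) else (0::'a)) = (\<lambda>v i. if i < n then a i * v i + g i v else 0)"
    by (intro exI[of _ "\<lambda>_. 1"] exI[of _ "\<lambda>i v. if i = 0 then f v else 0"]) simp
  thus ?thesis unfolding triangular_maps_def mem_Collect_eq .
qed

lemma E_tame:
  assumes j: "j < n" and f: "fq_poly q ({0..<n} - {j}) f"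
  shows "\<exists>F\<in>tame q n. \<forall>v\<in>points n. F v = E j f (v :: nat \<Rightarrow> 'a)"
proof -
  define g where "g = (\<lambda>v. f (\<lambda>i. v (sw j i)))"
  have g: "fq_poly q {1..<n} g" unfolding g_def
    by (rule fq_poly_rename[OF f]) (use j in \<open>auto simp: sw_def\<close>)
  define T0 where "T0 = (\<lambda>v i. if i < n then 1 * v i + (if i = 0 then g v else 0) else (0::'a))"
  define P where "P = (\<lambda>(v::nat \<Rightarrow> 'a) i. if i < n then v (sw j i) else 0)"
  have n0: "0 < n" using j by simp
  have T0: "T0 \<in> tame q n" unfolding T0_def by (rule tame.tri) (rule E0_tri[OF g n0])
  have P: "P \<in> tame q n" unfolding P_def by (rule tame.aff) (rule perm_affine[OF j])
  have "P \<circ> (T0 \<circ> P) \<in> tame q n" using T0 P by (intro tame.comp)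
  moreover have "\<forall>v\<in>points n. (P \<circ> (T0 \<circ> P)) v = E j f v"
  proof
    fix v :: "nat \<Rightarrow> 'a" assume v: "v \<in> points n"
    have gP: "g (P v) = f v" unfolding g_def
    proof (rule fq_poly_local[OF f], intro ballI)
      fix i assume "i \<in> {0..<n} - {j}"
      hence "i < n" by simp
      thus "P v (sw j i) = v i" using sw_lt[OF j \<open>i < n\<close>] by (simp add: P_def)
    qed
    show "(P \<circ> (T0 \<circ> P)) v = E j f v"
    proof
      fix i
      show "(P \<circ> (T0 \<circ> P)) v i = E j f v i"
      proof (cases "i < n")
        case True
        have si: "sw j i < n" using sw_lt[OF j True] .
        have Pv: "P v (sw j i) = v i" using si by (simp add: P_def)
        have "(P \<circ> (T0 \<circ> P)) v i = T0 (P v) (sw j i)" using True by (simp add: P_def)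
        also have "\<dots> = P v (sw j i) + (if sw j i = 0 then g (P v) else 0)"
          using si by (simp add: T0_def)
        also have "\<dots> = v i + (if i = j then f v else 0)"
          using Pv gP by (simp add: sw_def)
        also have "\<dots> = E j f v i" by (simp add: E_def)
        finally show ?thesis .
      next
        case False
        have "v i = 0" using v False by (simp add: points_def)
        moreover have "i \<noteq> j" using False j by auto
        ultimately show ?thesis using False by (simp add: P_def E_def)
      qed
    qed
  qed
  ultimately show ?thesis by blast
qed

lemma frob_points: "v \<in> points n \<Longrightarrow> frob_vec q k (v::nat \<Rightarrow> 'a) \<in> points n"
  by (simp add: points_def frob_fr)

lemma tame_props:
  "F \<in> tame q n \<Longrightarrow> (\<forall>v\<in>points n. F v \<in> points n) \<and>
     (\<forall>v\<in>points n. \<forall>k. F (frob_vec q k v) = frob_vec q k (F (v :: nat \<Rightarrow> 'a)))"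
proof (induction rule: tame.induct)
  case (aff F)
  from aff have "\<exists>A b B. (\<forall>i<n. \<forall>j<n. A i j \<in> Fq q \<and> B i j \<in> Fq q) \<and> (\<forall>i<n. b i \<in> Fq q) \<and>
      (\<forall>i<n. \<forall>j<n. (\<Sum>k<n. B i k * A k j) = (if i = j then 1 else 0)) \<and>
      F = (\<lambda>v i. if i < n then (\<Sum>j<n. A i j * v j) + b i else 0)"
    unfolding affine_maps_def mem_Collect_eq .
  then obtain A where "\<exists>b B. (\<forall>i<n. \<forall>j<n. A i j \<in> Fq q \<and> B i j \<in> Fq q) \<and> (\<forall>i<n. b i \<in> Fq q) \<and>
      (\<forall>i<n. \<forall>j<n. (\<Sum>k<n. B i k * A k j) = (if i = j then 1 else 0)) \<and>
      F = (\<lambda>v i. if i < n then (\<Sum>j<n. A i j * v j) + b i else 0)" ..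
  then obtain b where "\<exists>B. (\<forall>i<n. \<forall>j<n. A i j \<in> Fq q \<and> B i j \<in> Fq q) \<and> (\<forall>i<n. b i \<in> Fq q) \<and>
      (\<forall>i<n. \<forall>j<n. (\<Sum>k<n. B i k * A k j) = (if i = j then 1 else 0)) \<and>
      F = (\<lambda>v i. if i < n then (\<Sum>j<n. A i j * v j) + b i else 0)" ..
  then obtain B where H: "(\<forall>i<n. \<forall>j<n. A i j \<in> Fq q \<and> B i j \<in> Fq q) \<and> (\<forall>i<n. b i \<in> Fq q) \<and>
      (\<forall>i<n. \<forall>j<n. (\<Sum>k<n. B i k * A k j) = (if i = j then 1 else 0)) \<and>
      F = (\<lambda>v i. if i < n then (\<Sum>j<n. A i j * v j) + b i else 0)" ..
  have Ab1: "\<forall>i<n. \<forall>j<n. A i j \<in> Fq q \<and> B i j \<in> Fq q" using H by (elim conjE) assumption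
  have Ab2: "\<forall>i<n. b i \<in> Fq q" using H by (elim conjE) assumption
  note Ab = Ab1 Ab2
  have F: "F = (\<lambda>v i. if i < n then (\<Sum>j<n. A i j * v j) + b i else 0)"
    using H by (elim conjE) assumption
  show ?case
  proof (intro conjI ballI allI)
    fix v :: "nat \<Rightarrow> 'a" assume "v \<in> points n"
    show "F v \<in> points n" by (simp add: F points_def)
  next
    fix v :: "nat \<Rightarrow> 'a" and k assume "v \<in> points n"
    show "F (frob_vec q k v) = frob_vec q k (F v)"
    proof
      fix i
      show "F (frob_vec q k v) i = frob_vec q k (F v) i"
      proof (cases "i < n")
        case True
        have "fr q k (\<Sum>j<n. A i j * v j) = (\<Sum>j<n. fr q k (A i j) * fr q k (v j))"
          by (simp add: fr_sum fr_mult)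
        also have "\<dots> = (\<Sum>j<n. A i j * fr q k (v j))"
        proof (rule sum.cong)
          fix j assume "j \<in> {..<n}"
          hence "A i j \<in> Fq q" using Ab True by simp
          thus "fr q k (A i j) * fr q k (v j) = A i j * fr q k (v j)" by (simp add: Fq_fr)
        qed simp
        finally have "fr q k ((\<Sum>j<n. A i j * v j) + b i) = (\<Sum>j<n. A i j * fr q k (v j)) + b i"
          using Ab True by (simp add: fr_add Fq_fr)
        then show ?thesis using True by (simp add: F frob_fr)
      qed (simp add: F frob_fr)
    qed
  qed
next
  case (tri F)
  from tri have "\<exists>a f. (\<forall>i<n. a i \<in> Fq q \<and> a i \<noteq> 0 \<and> fq_poly q {i+1..<n} (f i)) \<and>
      F = (\<lambda>v i. if i < n then a i * v i + f i v else 0)"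
    unfolding triangular_maps_def mem_Collect_eq .
  then obtain a where "\<exists>f. (\<forall>i<n. a i \<in> Fq q \<and> a i \<noteq> 0 \<and> fq_poly q {i+1..<n} (f i)) \<and>
      F = (\<lambda>v i. if i < n then a i * v i + f i v else 0)" ..
  then obtain f where H: "(\<forall>i<n. a i \<in> Fq q \<and> a i \<noteq> 0 \<and> fq_poly q {i+1..<n} (f i)) \<and>
      F = (\<lambda>v i. if i < n then a i * v i + f i v else 0)" ..
  have af: "\<forall>i<n. a i \<in> Fq q \<and> a i \<noteq> 0 \<and> fq_poly q {i+1..<n} (f i)"
    using H by (elim conjE) assumption
  have F: "F = (\<lambda>v i. if i < n then a i * v i + f i v else 0)"
    using H by (elim conjE) assumption
  show ?case
  proof (intro conjI ballI allI)
    fix v :: "nat \<Rightarrow> 'a" assume "v \<in> points n"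
    show "F v \<in> points n" by (simp add: F points_def)
  next
    fix v :: "nat \<Rightarrow> 'a" and k assume "v \<in> points n"
    show "F (frob_vec q k v) = frob_vec q k (F v)"
    proof
      fix i
      show "F (frob_vec q k v) i = frob_vec q k (F v) i"
      proof (cases "i < n")
        case True
        have e1: "f i (frob_vec q k v) = fr q k (f i v)" using af True fq_poly_equiv by blast
        have e2: "fr q k (a i) = a i" using af True Fq_fr by blast
        have "fr q k (a i * v i + f i v) = a i * fr q k (v i) + f i (frob_vec q k v)"
          by (simp only: e1 e2 fr_add fr_mult)
        then show ?thesis using True by (simp add: F frob_fr)
      qed (simp add: F frob_fr)
    qed
  qed
next
  case (comp F G)
  show ?case
  proof (intro conjI ballI allI)
    fix v :: "nat \<Rightarrow> 'a" assume v: "v \<in> points n"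
    show "(F \<circ> G) v \<in> points n" using comp v by simp
  next
    fix v :: "nat \<Rightarrow> 'a" and k assume v: "v \<in> points n"
    have "G v \<in> points n" using comp v by blast
    then show "(F \<circ> G) (frob_vec q k v) = frob_vec q k ((F \<circ> G) v)" using comp v by simp
  qed
qed

lemma tame_orbit:
  assumes "F \<in> tame q n" "v \<in> points n"
  shows "F ` orbit q m v = orbit q m (F (v :: nat \<Rightarrow> 'a))"
proof -
  have eq: "\<And>k. F (frob_vec q k v) = frob_vec q k (F v)" using tame_props[OF assms(1)] assms(2) by blast
  show ?thesis
  proof
    show "F ` orbit q m v \<subseteq> orbit q m (F v)"
    proof
      fix y assume "y \<in> F ` orbit q m v"
      then obtain k where "k < m" "y = F (frob_vec q k v)" unfolding orbit_def by blast
      thus "y \<in> orbit q m (F v)" unfolding orbit_def using eq by blast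
    qed
    show "orbit q m (F v) \<subseteq> F ` orbit q m v"
    proof
      fix y assume "y \<in> orbit q m (F v)"
      then obtain k where "k < m" "y = frob_vec q k (F v)" unfolding orbit_def by blast
      hence "y = F (frob_vec q k v)" using eq by simp
      thus "y \<in> F ` orbit q m v" unfolding orbit_def using \<open>k < m\<close> by blast
    qed
  qed
qed

end

definition Step :: "nat \<Rightarrow> nat \<Rightarrow> (nat \<Rightarrow> 'a::{field,finite}) \<times> (nat \<Rightarrow> 'a) \<Rightarrow> (nat \<Rightarrow> 'a) \<times> (nat \<Rightarrow> 'a) \<Rightarrow> bool" where
  "Step q n p p' \<longleftrightarrow> (\<exists>j f. j < n \<and> fq_poly q ({0..<n} - {j}) f \<and> p' = (E j f (fst p), E j f (snd p)))"

definition ag :: "nat set \<Rightarrow> (nat \<Rightarrow> 'a) \<Rightarrow> (nat \<Rightarrow> 'a) \<Rightarrow> bool" where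
  "ag J v w \<longleftrightarrow> (\<forall>i\<in>J. v i = w i)"

definition fullJ :: "nat \<Rightarrow> nat \<Rightarrow> nat set \<Rightarrow> (nat \<Rightarrow> 'a::{field,finite}) \<Rightarrow> bool" where
  "fullJ q m J v \<longleftrightarrow> (\<forall>k. 0 < k \<and> k < m \<longrightarrow> \<not> ag J (frob_vec q k v) v)"

definition simJ :: "nat \<Rightarrow> nat set \<Rightarrow> (nat \<Rightarrow> 'a::{field,finite}) \<Rightarrow> (nat \<Rightarrow> 'a) \<Rightarrow> bool" where
  "simJ q J v w \<longleftrightarrow> (\<exists>k. ag J (frob_vec q k v) w)"

definition tag :: "nat \<Rightarrow> nat \<Rightarrow> nat set \<Rightarrow> (nat \<Rightarrow> 'a::{field,finite}) \<Rightarrow> (nat \<Rightarrow> 'a) \<Rightarrow> bool" where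
  "tag q m J x y \<longleftrightarrow> fullJ q m J x \<and> \<not> simJ q J y x"

definition prim :: "nat \<Rightarrow> nat \<Rightarrow> 'a::{field,finite} \<Rightarrow> bool" where
  "prim q m z \<longleftrightarrow> (\<forall>k. 0 < k \<and> k < m \<longrightarrow> fr q k z \<noteq> z)"

lemma ag_mono: "ag J v w \<Longrightarrow> J' \<subseteq> J \<Longrightarrow> ag J' v w"
  by (auto simp: ag_def)

context FF
begin

lemma fr_if01 [simp]: "fr q k (if P then 1 else 0) = (if P then 1 else (0::'a))"
  by simp

lemma fullJ_mono: "fullJ q m J v \<Longrightarrow> J \<subseteq> J' \<Longrightarrow> fullJ q m J' (v::nat \<Rightarrow> 'a)"
  unfolding fullJ_def using ag_mono by blast

lemma simJ_mono: "\<not> simJ q J v w \<Longrightarrow> J \<subseteq> J' \<Longrightarrow> \<not> simJ q J' v (w::nat \<Rightarrow> 'a)"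
  unfolding simJ_def using ag_mono by blast

lemma tag_mono: "tag q m J x y \<Longrightarrow> J \<subseteq> J' \<Longrightarrow> tag q m J' x (y::nat \<Rightarrow> 'a)"
  unfolding tag_def using fullJ_mono simJ_mono by blast

lemma E_local: "fq_poly q ({0..<n} - {j}) f \<Longrightarrow> f (E j f v) = f (v::nat \<Rightarrow> 'a)"
  by (rule fq_poly_local) (auto simp: E_def)

lemma E_inv: "fq_poly q ({0..<n} - {j}) f \<Longrightarrow> E j (\<lambda>v. - f v) (E j f v) = (v::nat \<Rightarrow> 'a)"
  using E_local[of n j f v] by (auto simp: E_def fun_eq_iff)

lemma E_points: "j < n \<Longrightarrow> v \<in> points n \<Longrightarrow> E j f v \<in> points n"
  by (auto simp: E_def points_def)

lemma E_frob: "fq_poly q S f \<Longrightarrow> E j f (frob_vec q k v) = frob_vec q k (E j f (v::nat \<Rightarrow> 'a))"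
  using fq_poly_equiv[of S f k v] by (auto simp: E_def fun_eq_iff frob_fr fr_add)

lemma Step_sym: "Step q n p p' \<Longrightarrow> Step q n p' (p :: (nat \<Rightarrow> 'a) \<times> (nat \<Rightarrow> 'a))"
proof -
  assume "Step q n p p'"
  then obtain j f where j: "j < n" and f: "fq_poly q ({0..<n} - {j}) f"
    and p': "p' = (E j f (fst p), E j f (snd p))" unfolding Step_def by blast
  have "p = (E j (\<lambda>v. - f v) (fst p'), E j (\<lambda>v. - f v) (snd p'))"
    using E_inv[OF f] p' by (cases p) simp
  moreover have "fq_poly q ({0..<n} - {j}) (\<lambda>v. - f v)" by (rule fq_poly_neg[OF f])
  ultimately show ?thesis unfolding Step_def using j by blast
qed

lemma Steps_sym: "(Step q n)\<^sup>*\<^sup>* p p' \<Longrightarrow> (Step q n)\<^sup>*\<^sup>* p' (p :: (nat \<Rightarrow> 'a) \<times> (nat \<Rightarrow> 'a))"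
proof (induction rule: rtranclp_induct)
  case base then show ?case by simp
next
  case (step y z)
  then show ?case using Step_sym[OF step(2)] by (meson converse_rtranclp_into_rtranclp)
qed

lemma Steps_tame:
  "(Step q n)\<^sup>*\<^sup>* p p' \<Longrightarrow> fst p \<in> points n \<Longrightarrow> snd p \<in> points n \<Longrightarrow>
   \<exists>F\<in>tame q n. F (fst p) = fst p' \<and> F (snd p) = snd (p' :: (nat \<Rightarrow> 'a) \<times> (nat \<Rightarrow> 'a)) \<and>
     fst p' \<in> points n \<and> snd p' \<in> points n"
proof (induction rule: rtranclp_induct)
  case base
  have "(\<lambda>v i. if i < n then v i else (0::'a)) \<in> tame q n" by (rule tame.aff[OF id_affine])
  moreover have "\<And>v. v \<in> points n \<Longrightarrow> (\<lambda>i. if i < n then v i else (0::'a)) = v"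
    by (auto simp: points_def fun_eq_iff)
  ultimately show ?case using base.prems by (intro bexI[of _ "\<lambda>v i. if i < n then v i else (0::'a)"]) auto
next
  case (step y z)
  from step.IH[OF step.prems] obtain F where F: "F \<in> tame q n" "F (fst p) = fst y" "F (snd p) = snd y"
    and y: "fst y \<in> points n" "snd y \<in> points n" by blast
  from step(2) obtain j f where j: "j < n" and f: "fq_poly q ({0..<n} - {j}) f"
    and z: "z = (E j f (fst y), E j f (snd y))" unfolding Step_def by blast
  obtain G where G: "G \<in> tame q n" "\<forall>v\<in>points n. G v = E j f v" using E_tame[OF j f] by blast
  have "G \<circ> F \<in> tame q n" using F(1) G(1) by (rule tame.comp[rotated])
  moreover have "(G \<circ> F) (fst p) = fst z" "(G \<circ> F) (snd p) = snd z" using F y G z by auto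
  moreover have "fst z \<in> points n" "snd z \<in> points n" using z y E_points[OF j] by auto
  ultimately show ?case by blast
qed

lemma targeted:
  assumes j: "j < n" and J: "J \<subseteq> {0..<n} - {j}" and t: "tag q m J x (y::nat \<Rightarrow> 'a)"
  shows "Step q n (x, y) (x(j := z), y)"
proof -
  define S where "S = {0..<n} - {j}"
  define c where "c = z - x j"
  define f where "f = Tr q m (\<lambda>v. c * delta S x v)"
  have finS: "finite S" by (simp add: S_def)
  have f: "fq_poly q S f" unfolding f_def
    by (rule Tr_fq, rule spanp_cmult, rule spanp_delta[OF finS])
  have fullS: "fullJ q m S x" using fullJ_mono[of J x S] t J by (simp add: tag_def S_def)
  have nsimS: "\<not> simJ q S y x" using simJ_mono[of J y x S] t J by (simp add: tag_def S_def)
  have fv: "f v = (\<Sum>k<m. fr q k c * (if ag S (frob_vec q (m - k) v) x then 1 else 0))" for v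
    unfolding f_def Tr_def by (simp add: delta_val[OF finS] fr_mult ag_def)
  have "f x = (\<Sum>k\<in>{0}. fr q k c * (if ag S (frob_vec q (m - k) x) x then 1 else 0))"
    unfolding fv
  proof (rule sum.mono_neutral_right)
    show "\<forall>k\<in>{..<m} - {0}. fr q k c * (if ag S (frob_vec q (m - k) x) x then 1 else 0) = 0"
    proof
      fix k assume "k \<in> {..<m} - {0}"
      hence "0 < m - k" "m - k < m" by auto
      hence "\<not> ag S (frob_vec q (m - k) x) x" using fullS by (simp add: fullJ_def)
      thus "fr q k c * (if ag S (frob_vec q (m - k) x) x then 1 else 0) = 0" by simp
    qed
  qed (use m1 in auto)
  hence fx: "f x = c" by (simp add: frob_m ag_def)
  have fy: "f y = 0" unfolding fv
  proof (rule sum.neutral, rule ballI)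
    fix k assume "k \<in> {..<m}"
    have "\<not> ag S (frob_vec q (m - k) y) x" using nsimS by (auto simp: simJ_def)
    thus "fr q k c * (if ag S (frob_vec q (m - k) y) x then 1 else 0) = 0" by simp
  qed
  have "(x(j := z), y) = (E j f x, E j f y)" using fx fy by (simp add: E_def c_def)
  thus ?thesis unfolding Step_def using j f S_def by auto
qed

lemma Step_swap: "Step q n (x, y) (x', y') \<Longrightarrow> Step q n (y, x) (y', x')"
  unfolding Step_def by auto

lemma Steps_swap: "(Step q n)\<^sup>*\<^sup>* (x, y) (x', y') \<Longrightarrow> (Step q n)\<^sup>*\<^sup>* (y, x) (y', (x'::nat \<Rightarrow> 'a))"
proof -
  have "(Step q n)\<^sup>*\<^sup>* p p' \<Longrightarrow> (Step q n)\<^sup>*\<^sup>* (snd p, fst p) (snd p', fst (p' :: (nat \<Rightarrow> 'a) \<times> _))" for p p'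
  proof (induction rule: rtranclp_induct)
    case (step b c)
    then show ?case using Step_swap[of n "fst b" "snd b" "fst c" "snd c"]
      by (metis prod.collapse rtranclp.rtrancl_into_rtrancl)
  qed simp
  thus "(Step q n)\<^sup>*\<^sup>* (x, y) (x', y') \<Longrightarrow> (Step q n)\<^sup>*\<^sup>* (y, x) (y', x')" by fastforce
qed

end

lemma nat_pow_bound: "(d::nat) \<le> 2 ^ (d - d div 2)"
proof (induction d rule: less_induct)
  case (less d)
  show ?case
  proof (cases "d < 2")
    case True then show ?thesis by (cases d) auto
  next
    case False
    then obtain e where e: "d = e + 2" by (metis add.commute le_Suc_ex not_less)
    have ih: "e \<le> 2 ^ (e - e div 2)" using less e by simp
    have "d - d div 2 = Suc (e - e div 2)" using e by simp
    hence "(2::nat) ^ (d - d div 2) = 2 * 2 ^ (e - e div 2)" by simp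
    moreover have "(1::nat) \<le> 2 ^ (e - e div 2)" by simp
    moreover have "e \<ge> 1 \<Longrightarrow> (2::nat) \<le> 2 ^ (e - e div 2)"
    proof -
      assume "e \<ge> 1"
      hence "e - e div 2 \<ge> 1" by linarith
      thus ?thesis by (metis power_increasing power_one_right one_le_numeral)
    qed
    ultimately show ?thesis using ih e by (cases "e \<ge> 1") linarith+
  qed
qed

lemma nat_ineq:
  assumes q: "2 \<le> (q::nat)" and d: "1 \<le> d"
  shows "(d - 1) * q ^ (d div 2) < q ^ d"
proof -
  have "d - 1 < 2 ^ (d - d div 2)" using nat_pow_bound[of d] d by linarith
  also have "(2::nat) ^ (d - d div 2) \<le> q ^ (d - d div 2)" using q by (simp add: power_mono)
  finally have *: "d - 1 < q ^ (d - d div 2)" .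
  have "(d - 1) * q ^ (d div 2) < q ^ (d - d div 2) * q ^ (d div 2)"
    using * q by (intro mult_strict_right_mono) auto
  also have "\<dots> = q ^ d" by (simp flip: power_add)
  finally show ?thesis .
qed

context FF
begin

lemma fr_mult_fix: "fr q e (y::'a) = y \<Longrightarrow> fr q (e * i) y = y"
proof (induction i)
  case 0 then show ?case by simp
next
  case (Suc i)
  have "fr q (e * Suc i) y = fr q e (fr q (e * i) y)" by (simp add: fr_comp add.commute)
  then show ?case using Suc by simp
qed

lemma fr_dvd_fix: "fr q e (y::'a) = y \<Longrightarrow> e dvd e' \<Longrightarrow> fr q e' y = y"
  using fr_mult_fix by (auto elim!: dvdE)

lemma fix_gcd: "fr q a (y::'a) = y \<Longrightarrow> fr q b y = y \<Longrightarrow> fr q (gcd a b) y = y"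
proof (induction b arbitrary: a rule: less_induct)
  case (less b)
  show ?case
  proof (cases "b = 0")
    case True then show ?thesis using less by simp
  next
    case False
    have "a = a mod b + b * (a div b)" by simp
    hence "fr q a y = fr q (a mod b) (fr q (b * (a div b)) y)" by (metis fr_comp)
    hence "fr q (a mod b) y = y" using less.prems fr_mult_fix[of b y "a div b"] by simp
    hence "fr q (gcd b (a mod b)) y = y" using less.IH[of "a mod b" b] False less.prems by simp
    thus ?thesis by (simp add: gcd_non_0_nat[OF False])
  qed
qed

lemma card_fix: assumes g: "0 < g" shows "card {z::'a. fr q g z = z} \<le> q ^ g"
proof -
  define p :: "'a poly" where "p = monom 1 (q ^ g) - monom 1 1"
  have "q \<le> q ^ g" using g q_ge2 by (simp add: self_le_power)
  hence qg: "q ^ g \<ge> 2" using q_ge2 by linarith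
  have "coeff p (q ^ g) = 1" using qg by (simp add: p_def coeff_monom)
  hence p0: "p \<noteq> 0" by auto
  have deg: "degree p \<le> q ^ g" unfolding p_def
    by (rule degree_diff_le) (use qg in \<open>auto intro: degree_monom_le order.trans[OF degree_monom_le]\<close>)
  have "{z::'a. fr q g z = z} = {z. poly p z = 0}" by (auto simp: p_def poly_monom fr_def)
  thus ?thesis using card_poly_roots_bound[OF p0] deg by simp
qed

lemma card_coset:
  assumes "\<forall>k1\<in>K. \<forall>k2\<in>K. fr q g (k1 - k2) = k1 - (k2::'a)"
  shows "card K \<le> card {z::'a. fr q g z = z}"
proof (cases "K = {}")
  case True then show ?thesis by simp
next
  case False
  then obtain k1 where k1: "k1 \<in> K" by blast
  have "K \<subseteq> (\<lambda>z. k1 - z) ` {z. fr q g z = z}"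
  proof
    fix k assume "k \<in> K"
    hence "fr q g (k1 - k) = k1 - k" using assms k1 by blast
    thus "k \<in> (\<lambda>z. k1 - z) ` {z. fr q g z = z}" by (intro image_eqI[of _ _ "k1 - k"]) auto
  qed
  hence "card K \<le> card ((\<lambda>z. k1 - z) ` {z. fr q g z = z})" by (intro card_mono) auto
  also have "\<dots> \<le> card {z::'a. fr q g z = z}" by (rule card_image_le) simp
  finally show ?thesis .
qed

definition kap :: "nat \<Rightarrow> 'a \<Rightarrow> 'a" where
  "kap d c = (\<Sum>l<m div d. fr q (l * d) c)"

lemma card_fiber:
  assumes d: "0 < d" "d dvd m"
  shows "card {c::'a. kap d c = k0} \<le> q ^ (m - d)"
proof -
  define M where "M = m div d"
  have M: "M \<ge> 1" "M * d = m" using d m1 by (auto simp: M_def elim!: dvdE)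
  define p :: "'a poly" where "p = (\<Sum>l<M. monom 1 (q ^ (l * d))) - [:k0:]"
  have ex: "q ^ (l * d) = 1 \<longleftrightarrow> l = 0" for l using q_ge2 d by simp
  have "coeff p 1 = (\<Sum>l<M. if q ^ (l * d) = 1 then 1 else 0)"
    by (simp add: p_def coeff_sum coeff_monom)
  also have "\<dots> = (\<Sum>l<M. if l = 0 then 1 else 0)" using ex by simp
  also have "\<dots> = (1::'a)" using M by (simp add: sum.delta)
  finally have p0: "p \<noteq> 0" by auto
  have deg: "degree p \<le> q ^ (m - d)"
  proof -
    have "degree (\<Sum>l<M. monom (1::'a) (q ^ (l * d))) \<le> q ^ (m - d)"
    proof (rule degree_sum_le)
      fix l assume "l \<in> {..<M}"
      hence "l \<le> M - 1" by simp
      hence "l * d \<le> (M - 1) * d" by (rule mult_le_mono1)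
      also have "(M - 1) * d = m - d" using M by (simp add: diff_mult_distrib)
      finally have "l * d \<le> m - d" .
      hence "q ^ (l * d) \<le> q ^ (m - d)" using q_ge2 by (simp add: power_increasing)
      thus "degree (monom (1::'a) (q ^ (l * d))) \<le> q ^ (m - d)" using degree_monom_le order.trans by blast
    qed simp
    thus ?thesis unfolding p_def by (rule degree_diff_le) simp
  qed
  have "{c::'a. kap d c = k0} = {c. poly p c = 0}"
    by (auto simp: p_def kap_def M_def poly_sum poly_monom fr_def)
  thus ?thesis using card_poly_roots_bound[OF p0] deg by simp
qed

end

context FF
begin

lemma kap_fix: assumes "0 < d" "d dvd m" shows "fr q d (kap d c) = kap d (c::'a)"
proof -
  define M where "M = m div d"
  have M: "M * d = m" using assms by (simp add: M_def)
  have "fr q d (kap d c) = (\<Sum>l<M. fr q (Suc l * d) c)"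
    by (simp add: kap_def M_def fr_sum fr_comp add.commute)
  also have "\<dots> = (\<Sum>l<M. fr q (l * d) c)"
  proof -
    have "(\<Sum>l<Suc M. fr q (l * d) c) = fr q (0 * d) c + (\<Sum>l<M. fr q (Suc l * d) c)"
      by (rule sum.lessThan_Suc_shift)
    moreover have "(\<Sum>l<Suc M. fr q (l * d) c) = (\<Sum>l<M. fr q (l * d) c) + fr q (M * d) c" by simp
    ultimately show ?thesis using M fr_m by simp
  qed
  finally show ?thesis by (simp add: kap_def M_def)
qed

lemma key:
  assumes d: "0 < d" "d dvd m" and hyp: "\<forall>e. d dvd e \<longrightarrow> fr q e a = a \<longrightarrow> m dvd e"
    and g: "0 < g" "g dvd m" and fx: "fr q g (a + kap d c) = a + kap d (c::'a)"
  shows "gcd g d * (m div g) \<le> d"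
proof -
  define L where "L = lcm g d"
  have "fr q L (a + kap d c) = a + kap d c" using fr_dvd_fix[OF fx] by (simp add: L_def)
  moreover have "fr q L (kap d c) = kap d c" using fr_dvd_fix[OF kap_fix[OF d]] by (simp add: L_def)
  ultimately have "fr q L a = a" by (simp add: fr_add)
  hence "m dvd L" using hyp by (simp add: L_def)
  moreover have "L > 0" using g d by (simp add: L_def lcm_pos_nat)
  ultimately have mL: "m \<le> L" by (simp add: dvd_imp_le)
  have gl: "g * d = gcd g d * L" unfolding L_def by (rule prod_gcd_lcm_nat)
  have m: "m = g * (m div g)" using g by simp
  have "g * (gcd g d * (m div g)) = gcd g d * m" using m by (metis mult.left_commute)
  also have "\<dots> \<le> gcd g d * L" using mL by simp
  also have "\<dots> = g * d" using gl by simp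
  finally show ?thesis using g by simp
qed

lemma main_count:
  assumes d: "0 < d" "d dvd m" and hyp: "\<forall>e. d dvd e \<longrightarrow> fr q e a = a \<longrightarrow> m dvd e"
  shows "\<exists>c. prim q m (a + kap d (c::'a))"
proof -
  define Bad where "Bad t = {c::'a. t dvd m \<and> fr q (m div t) (a + kap d c) = a + kap d c}" for t
  have sub: "{c. \<not> prim q m (a + kap d c)} \<subseteq> (\<Union>t\<in>{2..d}. Bad t)"
  proof
    fix c assume "c \<in> {c. \<not> prim q m (a + kap d c)}"
    then obtain e where e: "0 < e" "e < m" "fr q e (a + kap d c) = a + kap d c"
      by (auto simp: prim_def)
    define g where "g = gcd e m"
    have fg: "fr q g (a + kap d c) = a + kap d c" unfolding g_def by (rule fix_gcd[OF e(3) fr_m])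
    have g0: "0 < g" using e by (simp add: g_def)
    have gm: "g dvd m" by (simp add: g_def)
    have gle: "g \<le> e" using e by (simp add: g_def gcd_le1_nat)
    define t where "t = m div g"
    have mt: "m = g * t" using gm by (simp add: t_def)
    have t2: "t \<ge> 2"
    proof (rule ccontr)
      assume "\<not> t \<ge> 2"
      hence "t = 0 \<or> t = 1" by auto
      thus False using mt m1 gle e by auto
    qed
    have "gcd g d * t \<le> d" using key[OF d hyp g0 gm fg] by (simp add: t_def)
    moreover have "gcd g d \<ge> 1" using d by (simp add: Suc_le_eq)
    ultimately have "t \<le> d" by (metis le_trans mult_1 mult_le_mono1)
    moreover have "t dvd m" using mt by simp
    moreover have "m div t = g" using mt t2 by simp
    ultimately show "c \<in> (\<Union>t\<in>{2..d}. Bad t)" using t2 fg by (auto simp: Bad_def)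
  qed
  have bnd: "card (Bad t) \<le> q ^ (d div 2) * q ^ (m - d)" if t: "t \<in> {2..d}" for t
  proof (cases "Bad t = {}")
    case True then show ?thesis by simp
  next
    case False
    then obtain c0 where c0: "c0 \<in> Bad t" by blast
    hence tm: "t dvd m" by (simp add: Bad_def)
    define g where "g = m div t"
    have mt: "m = t * g" using tm by (simp add: g_def)
    have g0: "0 < g" using mt m1 by (cases g) auto
    have gm: "g dvd m" using mt by simp
    have mg: "m div g = t" using mt g0 by simp
    have "gcd g d * t \<le> d" using key[OF d hyp g0 gm, of c0] c0 mg by (simp add: Bad_def g_def)
    define gg where "gg = gcd g d"
    have gg0: "0 < gg" using d by (simp add: gg_def)
    have "gg * 2 \<le> d" using \<open>gcd g d * t \<le> d\<close> t unfolding gg_def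
      by (meson atLeastAtMost_iff le_trans mult_le_mono2)
    hence ggd: "gg \<le> d div 2" by linarith
    define K where "K = kap d ` Bad t"
    have Kfix: "\<forall>k1\<in>K. \<forall>k2\<in>K. fr q gg (k1 - k2) = k1 - k2"
    proof (intro ballI)
      fix k1 k2 assume "k1 \<in> K" "k2 \<in> K"
      then obtain c1 c2 where c: "c1 \<in> Bad t" "c2 \<in> Bad t" "k1 = kap d c1" "k2 = kap d c2"
        by (auto simp: K_def)
      have y1: "fr q g (a + k1) = a + k1" using c by (simp add: Bad_def g_def)
      have y2: "fr q g (a + k2) = a + k2" using c by (simp add: Bad_def g_def)
      have "fr q g ((a + k1) - (a + k2)) = (a + k1) - (a + k2)"
        by (simp only: fr_diff y1 y2)
      hence 1: "fr q g (k1 - k2) = k1 - k2" by simp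
      have 2: "fr q d (k1 - k2) = k1 - k2" using c kap_fix[OF d] by (simp add: fr_diff)
      show "fr q gg (k1 - k2) = k1 - k2" unfolding gg_def by (rule fix_gcd[OF 1 2])
    qed
    have "card K \<le> q ^ gg" using card_coset[OF Kfix] card_fix[OF gg0] by linarith
    also have "\<dots> \<le> q ^ (d div 2)" using ggd q_ge2 by (simp add: power_increasing)
    finally have cK: "card K \<le> q ^ (d div 2)" .
    have "Bad t \<subseteq> (\<Union>k0\<in>K. {c. kap d c = k0})" by (auto simp: K_def)
    hence "card (Bad t) \<le> card (\<Union>k0\<in>K. {c. kap d c = k0})" by (intro card_mono) auto
    also have "\<dots> \<le> (\<Sum>k0\<in>K. card {c. kap d c = k0})" by (rule card_UN_le) simp
    also have "\<dots> \<le> (\<Sum>k0\<in>K. q ^ (m - d))" by (rule sum_mono) (rule card_fiber[OF d])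
    also have "\<dots> = card K * q ^ (m - d)" by simp
    also have "\<dots> \<le> q ^ (d div 2) * q ^ (m - d)" using cK by simp
    finally show ?thesis .
  qed
  have "card {c. \<not> prim q m (a + kap d c)} \<le> card (\<Union>t\<in>{2..d}. Bad t)"
    using sub by (intro card_mono) auto
  also have "\<dots> \<le> (\<Sum>t\<in>{2..d}. card (Bad t))" by (rule card_UN_le) simp
  also have "\<dots> \<le> (\<Sum>t\<in>{2..d}. q ^ (d div 2) * q ^ (m - d))" by (rule sum_mono) (rule bnd)
  also have "\<dots> = (d - 1) * q ^ (d div 2) * q ^ (m - d)" by simp
  also have "\<dots> < q ^ d * q ^ (m - d)"
    using nat_ineq[OF q_ge2, of d] d q_ge2 by (intro mult_strict_right_mono) auto
  also have "\<dots> = q ^ m"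
  proof -
    have "d \<le> m" using d m1 by (simp add: dvd_imp_le)
    hence "d + (m - d) = m" by simp
    thus ?thesis by (simp flip: power_add)
  qed
  finally have "card {c. \<not> prim q m (a + kap d c)} < card (UNIV :: 'a set)" using cardF by simp
  hence "{c. \<not> prim q m (a + kap d c)} \<noteq> UNIV" by auto
  thus ?thesis by auto
qed

end

context FF
begin

lemma ag_frob: "ag S v w \<Longrightarrow> ag S (frob_vec q k v) (frob_vec q k (w::nat \<Rightarrow> 'a))"
  by (simp add: ag_def frob_fr)

lemma ag_trans: "ag S u v \<Longrightarrow> ag S v w \<Longrightarrow> ag S u w"
  by (simp add: ag_def)

lemma ag_sym: "ag S u v \<Longrightarrow> ag S v u"
  by (simp add: ag_def)

lemma ag_frob_inj: "ag S (frob_vec q k v) (frob_vec q k (w::nat \<Rightarrow> 'a)) \<Longrightarrow> ag S v w"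
  by (auto simp: ag_def frob_fr intro: fr_inj)

lemma global_step:
  assumes full: "fullJ q m {0..<n} (x::nat \<Rightarrow> 'a)" and j: "j < n"
  shows "\<exists>f. fq_poly q ({0..<n} - {j}) f \<and> prim q m (x j + f x)"
proof -
  define S where "S = {0..<n} - {j}"
  define P where "P k \<longleftrightarrow> ag S (frob_vec q k x) x" for k
  have P0: "P 0" by (simp add: P_def ag_def)
  have Pm: "P m" by (simp add: P_def frob_m ag_def)
  have Padd: "P (a + b)" if "P a" "P b" for a b
  proof -
    have "ag S (frob_vec q a (frob_vec q b x)) (frob_vec q a x)" using that ag_frob by (simp add: P_def)
    thus ?thesis using that by (simp add: P_def frob_comp ag_trans)
  qed
  have Psub: "P (a - b)" if "P a" "P b" "b \<le> a" for a b
  proof -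
    have "frob_vec q b (frob_vec q (a - b) x) = frob_vec q a x" using that(3) by (simp add: frob_comp)
    hence "ag S (frob_vec q b (frob_vec q (a - b) x)) (frob_vec q b x)"
      using that(1,2) by (metis P_def ag_sym ag_trans)
    thus ?thesis by (simp add: P_def ag_frob_inj)
  qed
  have Pmul: "P (d * i)" if "P d" for d i
    using that by (induction i) (simp_all add: P0 Padd)
  define d where "d = (LEAST k. 0 < k \<and> P k)"
  have dex: "0 < m \<and> P m" using Pm m1 by simp
  have d0: "0 < d" and Pd: "P d" using LeastI[of "\<lambda>k. 0 < k \<and> P k", OF dex] by (simp_all add: d_def)
  have dmin: "\<And>k. 0 < k \<Longrightarrow> P k \<Longrightarrow> d \<le> k" unfolding d_def by (simp add: Least_le)
  have Pdvd: "P k \<longleftrightarrow> d dvd k" for k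
  proof
    assume Pk: "P k"
    have le: "d * (k div d) \<le> k" by simp
    have "P (k - d * (k div d))" by (rule Psub[OF Pk Pmul[OF Pd] le])
    moreover have "k - d * (k div d) = k mod d" by (simp add: minus_mult_div_eq_mod)
    ultimately have "P (k mod d)" by simp
    moreover have "k mod d < d" using d0 by simp
    ultimately have "k mod d = 0" using dmin by (meson leD not_gr0)
    thus "d dvd k" by (simp add: dvd_eq_mod_eq_0)
  next
    assume "d dvd k"
    then obtain i where "k = d * i" by (auto elim: dvdE)
    thus "P k" using Pmul[OF Pd] by simp
  qed
  have dm: "d dvd m" using Pm Pdvd by simp
  have hyp: "\<forall>e. d dvd e \<longrightarrow> fr q e (x j) = x j \<longrightarrow> m dvd e"
  proof (intro allI impI)
    fix e assume "d dvd e" and fe: "fr q e (x j) = x j"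
    hence "P e" using Pdvd by simp
    hence "ag {0..<n} (frob_vec q e x) x" using fe j by (auto simp: P_def S_def ag_def frob_fr)
    hence "ag {0..<n} (frob_vec q (e mod m) x) x" by (simp flip: frob_mod)
    moreover have "e mod m < m" using m1 by simp
    ultimately have "e mod m = 0" using full by (auto simp: fullJ_def)
    thus "m dvd e" by (simp add: dvd_eq_mod_eq_0)
  qed
  obtain c where c: "prim q m (x j + kap d c)" using main_count[OF d0 dm hyp] by blast
  define f where "f = Tr q m (\<lambda>v. c * delta S x v)"
  have finS: "finite S" by (simp add: S_def)
  have f: "fq_poly q S f" unfolding f_def
    by (rule Tr_fq, rule spanp_cmult, rule spanp_delta[OF finS])
  have fv: "f x = (\<Sum>k<m. fr q k c * (if P (m - k) then 1 else 0))"
    unfolding f_def Tr_def P_def by (simp add: delta_val[OF finS] fr_mult ag_def)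
  also have "\<dots> = (\<Sum>k\<in>{k. k < m \<and> d dvd k}. fr q k c)"
  proof -
    have "P (m - k) \<longleftrightarrow> d dvd k" if "k < m" for k
    proof -
      have "P (m - k) \<longleftrightarrow> d dvd (m - k)" by (rule Pdvd)
      also have "\<dots> \<longleftrightarrow> d dvd k"
      proof
        assume "d dvd (m - k)"
        hence "d dvd (m - (m - k))" by (rule dvd_diff_nat[OF dm])
        moreover have "m - (m - k) = k" using that by simp
        ultimately show "d dvd k" by simp
      next
        assume "d dvd k"
        thus "d dvd (m - k)" by (rule dvd_diff_nat[OF dm])
      qed
      finally show ?thesis .
    qed
    hence "(\<Sum>k<m. fr q k c * (if P (m - k) then 1 else 0)) = (\<Sum>k<m. if d dvd k then fr q k c else 0)"
      by (intro sum.cong) auto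
    also have "\<dots> = (\<Sum>k\<in>{k. k < m \<and> d dvd k}. fr q k c)"
      by (simp add: sum.inter_filter[symmetric] lessThan_def Collect_conj_eq)
    finally show ?thesis .
  qed
  also have "\<dots> = kap d c" unfolding kap_def
  proof (rule sum.reindex_bij_witness[of _ "\<lambda>l. l * d" "\<lambda>k. k div d"])
    fix l assume "l \<in> {..<m div d}"
    hence "l < m div d" by simp
    hence "l * d < (m div d) * d" using d0 by (rule mult_less_mono1)
    hence "l * d < m" using dm by simp
    thus "l * d \<in> {k. k < m \<and> d dvd k}" by simp
    show "l * d div d = l" using d0 by simp
  next
    fix k assume "k \<in> {k. k < m \<and> d dvd k}"
    hence k: "k < m" "d dvd k" by auto
    thus "k div d * d = k" by simp
    obtain a where a: "k = d * a" using k(2) by (auto elim: dvdE)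
    obtain b where b: "m = d * b" using dm by (auto elim: dvdE)
    have "a < b" using k(1) a b d0 by simp
    thus "k div d \<in> {..<m div d}" using a b d0 by simp
  qed simp
  finally have "f x = kap d c" .
  thus ?thesis using c f by (auto simp: S_def)
qed

end

locale FFn = FF q m ty for q m and ty :: "'a::{field,finite} itself" +
  fixes n :: nat
  assumes n3: "3 \<le> n"
begin

abbreviation Steps :: "(nat \<Rightarrow> 'a) \<times> (nat \<Rightarrow> 'a) \<Rightarrow> (nat \<Rightarrow> 'a) \<times> (nat \<Rightarrow> 'a) \<Rightarrow> bool" where
  "Steps \<equiv> (Step q n)\<^sup>*\<^sup>*"

lemma tag_cong: "ag J x1 x \<Longrightarrow> tag q m J x y \<Longrightarrow> tag q m J x1 (y::nat \<Rightarrow> 'a)"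
  unfolding tag_def fullJ_def simJ_def ag_def by (auto simp: frob_fr)

lemma points_eq: "x \<in> points n \<Longrightarrow> x' \<in> points n \<Longrightarrow> (\<forall>i<n. x i = x' i) \<Longrightarrow> x = (x'::nat \<Rightarrow> 'a)"
  by (auto simp: points_def fun_eq_iff) (metis not_less)

lemma free_reach:
  assumes "tag q m J x y" "J \<subseteq> {0..<n}" "x \<in> points n" "x' \<in> points n" "ag J x' x"
  shows "Steps (x, y) (x', (y::nat \<Rightarrow> 'a))"
  using assms
proof (induction "card {i. i < n \<and> x i \<noteq> x' i}" arbitrary: x rule: less_induct)
  case less
  show ?case
  proof (cases "{i. i < n \<and> x i \<noteq> x' i} = {}")
    case True
    hence "x = x'" using points_eq[OF less.prems(3,4)] by blast
    thus ?thesis by simp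
  next
    case False
    then obtain i where i: "i < n" "x i \<noteq> x' i" by blast
    have iJ: "i \<notin> J" using i less.prems(5) by (auto simp: ag_def)
    define x1 where "x1 = x(i := x' i)"
    have st: "Step q n (x, y) (x1, y)" unfolding x1_def
      by (rule targeted[OF i(1) _ less.prems(1)]) (use less.prems(2) iJ in auto)
    have t1: "tag q m J x1 y" by (rule tag_cong[OF _ less.prems(1)]) (use iJ in \<open>auto simp: x1_def ag_def\<close>)
    have p1: "x1 \<in> points n" using less.prems(3) i by (auto simp: x1_def points_def)
    have a1: "ag J x' x1" using less.prems(5) iJ by (auto simp: x1_def ag_def)
    have "{k. k < n \<and> x1 k \<noteq> x' k} \<subset> {k. k < n \<and> x k \<noteq> x' k}" using i by (auto simp: x1_def)
    hence "card {k. k < n \<and> x1 k \<noteq> x' k} < card {k. k < n \<and> x k \<noteq> x' k}"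
      by (intro psubset_card_mono) auto
    hence "Steps (x1, y) (x', y)" using less.hyps t1 less.prems(2) p1 less.prems(4) a1 by blast
    thus ?thesis using st by (meson converse_rtranclp_into_rtranclp)
  qed
qed

lemma prim_mod:
  assumes "prim q m z" "fr q k1 w = z" "fr q k2 w = (z::'a)"
  shows "k1 mod m = k2 mod m"
proof -
  have A: "a = b" if "prim q m z" "fr q a w = z" "fr q b w = z" "a < m" "b < m" "a \<le> b" for a b
  proof -
    have "fr q (b - a) z = fr q (b - a) (fr q a w)" using that by simp
    also have "\<dots> = fr q b w" using that(6) by (simp add: fr_comp)
    finally have fz: "fr q (b - a) z = z" using that by simp
    show "a = b"
    proof (rule ccontr)
      assume "a \<noteq> b"
      hence "0 < b - a" "b - a < m" using that by auto
      thus False using fz that(1) by (auto simp: prim_def)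
    qed
  qed
  have "fr q (k1 mod m) w = z" "fr q (k2 mod m) w = z" using assms by (simp_all flip: fr_mod)
  moreover have "k1 mod m < m" "k2 mod m < m" using m1 by simp_all
  ultimately show ?thesis using A[OF assms(1)] by (metis nle_le)
qed

lemma prim_full: "prim q m (x c) \<Longrightarrow> c \<in> J \<Longrightarrow> fullJ q m J (x::nat \<Rightarrow> 'a)"
  by (auto simp: prim_def fullJ_def ag_def frob_fr)

lemma alpha_split:
  assumes t: "tag q m {a, b} x y" and c: "prim q m (x c)"
  shows "tag q m {a, c} x y \<or> tag q m {c, b} x (y::nat \<Rightarrow> 'a)"
proof (rule ccontr)
  assume "\<not> ?thesis"
  moreover have "fullJ q m {a, c} x" "fullJ q m {c, b} x" using prim_full[of x c, OF c] by auto
  ultimately have "simJ q {a, c} y x" "simJ q {c, b} y x" by (auto simp: tag_def)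
  then obtain k1 k2 where k1: "ag {a, c} (frob_vec q k1 y) x" and k2: "ag {c, b} (frob_vec q k2 y) x"
    by (auto simp: simJ_def)
  have "fr q k1 (y c) = x c" "fr q k2 (y c) = x c" using k1 k2 by (auto simp: ag_def frob_fr)
  hence "k1 mod m = k2 mod m" using prim_mod[OF c] by blast
  hence "frob_vec q k1 y = frob_vec q k2 y" by (metis frob_mod)
  hence "ag {a, b} (frob_vec q k1 y) x" using k1 k2 by (auto simp: ag_def)
  hence "simJ q {a, b} y x" by (auto simp: simJ_def)
  thus False using t by (simp add: tag_def)
qed

definition tt :: "'a \<Rightarrow> 'a" where "tt z = (if z = 0 then 1 else 0)"

lemma fr_01: "z = 0 \<or> z = 1 \<Longrightarrow> fr q k (z::'a) = z"
  by auto

lemma tt_01: "tt z = 0 \<or> tt (z::'a) = 1" by (simp add: tt_def)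

lemma tag_alpha:
  assumes "prim q m \<alpha>" "x i = \<alpha>" "x l = tt (y l)" "i \<noteq> l"
  shows "tag q m {i, l} x (y::nat \<Rightarrow> 'a)"
proof -
  have "fullJ q m {i, l} x" using prim_full[of x i] assms by simp
  moreover have "\<not> simJ q {i, l} y x"
  proof
    assume "simJ q {i, l} y x"
    then obtain k where "fr q k (y l) = tt (y l)" using assms by (auto simp: simJ_def ag_def frob_fr)
    thus False
    proof (cases "y l = 0")
      case True then show False using \<open>fr q k (y l) = tt (y l)\<close> by (simp add: tt_def)
    next
      case False
      hence "fr q k (y l) \<noteq> 0" using fr_inj[of k "y l" 0] by auto
      then show False using \<open>fr q k (y l) = tt (y l)\<close> False by (simp add: tt_def)
    qed
  qed
  ultimately show ?thesis by (simp add: tag_def)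
qed

definition Rv :: "'a \<Rightarrow> (nat \<Rightarrow> 'a) \<Rightarrow> nat \<Rightarrow> 'a" where
  "Rv \<alpha> y = (\<lambda>i. if i = 0 then \<alpha> else if i = 1 then tt (y 1) else if i = 2 then tt (y 2) else 0)"

lemma Rv_points: "Rv \<alpha> y \<in> points n"
  using n3 by (auto simp: Rv_def points_def)

lemma G1_to_R:
  assumes pa: "prim q m \<alpha>" and x: "x \<in> points n" "x 0 = \<alpha>" and l: "l \<noteq> 0" "l < n"
    and t: "tag q m {0, l} x y"
  shows "Steps (x, y) (Rv \<alpha> y, (y::nat \<Rightarrow> 'a))"
proof (cases "l = 1")
  case True
  define x' where "x' = (\<lambda>i::nat. if i = 0 then \<alpha> else if i = 1 then x 1 else if i = 2 then tt (y 2) else 0)"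
  have p': "x' \<in> points n" using n3 by (auto simp: x'_def points_def)
  have s1: "Steps (x, y) (x', y)"
    by (rule free_reach[OF t _ x(1) p']) (use l True x(2) in \<open>auto simp: ag_def x'_def\<close>)
  have t': "tag q m {0, 2} x' y" by (rule tag_alpha[OF pa]) (auto simp: x'_def)
  have s2: "Steps (x', y) (Rv \<alpha> y, y)"
    by (rule free_reach[OF t' _ p' Rv_points]) (use n3 in \<open>auto simp: ag_def x'_def Rv_def\<close>)
  show ?thesis using s1 s2 by simp
next
  case False
  define x' where "x' = (\<lambda>i::nat. if i = 0 then \<alpha> else if i = 1 then tt (y 1) else if i = l then x l else 0)"
  have p': "x' \<in> points n" using n3 l by (auto simp: x'_def points_def)
  have s1: "Steps (x, y) (x', y)"
    by (rule free_reach[OF t _ x(1) p']) (use l False x(2) in \<open>auto simp: ag_def x'_def\<close>)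
  have t': "tag q m {0, 1} x' y" by (rule tag_alpha[OF pa]) (auto simp: x'_def)
  have s2: "Steps (x', y) (Rv \<alpha> y, y)"
    by (rule free_reach[OF t' _ p' Rv_points]) (use n3 in \<open>auto simp: ag_def x'_def Rv_def\<close>)
  show ?thesis using s1 s2 by simp
qed

lemma case1_to_R:
  assumes pa: "prim q m \<alpha>" and x: "x \<in> points n" and ab: "a < n" "b < n" "a \<noteq> 0" "b \<noteq> 0"
    and t: "tag q m {a, b} x y"
  shows "Steps (x, y) (Rv \<alpha> y, (y::nat \<Rightarrow> 'a))"
proof -
  define x1 where "x1 = x(0 := \<alpha>)"
  have p1: "x1 \<in> points n" using x n3 by (auto simp: x1_def points_def)
  have s1: "Steps (x, y) (x1, y)"
    by (rule free_reach[OF t _ x p1]) (use ab in \<open>auto simp: ag_def x1_def\<close>)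
  have t1: "tag q m {a, b} x1 y" by (rule tag_cong[OF _ t]) (use ab in \<open>auto simp: ag_def x1_def\<close>)
  have "tag q m {a, 0} x1 y \<or> tag q m {0, b} x1 y" by (rule alpha_split[OF t1]) (simp add: x1_def pa)
  moreover have "x1 0 = \<alpha>" by (simp add: x1_def)
  ultimately have "Steps (x1, y) (Rv \<alpha> y, y)"
    using G1_to_R[OF pa p1] ab by (metis insert_commute)
  thus ?thesis using s1 by simp
qed

lemma pair_to_R:
  assumes pa: "prim q m \<alpha>" and x: "x \<in> points n" and ab: "a < n" "b < n" "a \<noteq> b"
    and t: "tag q m {a, b} x y"
  shows "Steps (x, y) (Rv \<alpha> y, (y::nat \<Rightarrow> 'a))"
proof (cases "a = 0 \<or> b = 0")
  case False then show ?thesis using case1_to_R[OF pa x] ab t by blast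
next
  case True
  then obtain b' where b': "b' < n" "b' \<noteq> 0" and t0: "tag q m {0, b'} x y"
    using ab t by (metis insert_commute)
  define l where "l = (if b' = 1 then 2 else (1::nat))"
  have l: "l < n" "l \<noteq> 0" "l \<noteq> b'" using n3 by (auto simp: l_def)
  define x2 where "x2 = x(l := \<alpha>)"
  have p2: "x2 \<in> points n" using x l by (auto simp: x2_def points_def)
  have s2: "Steps (x, y) (x2, y)"
    by (rule free_reach[OF t0 _ x p2]) (use b' l in \<open>auto simp: ag_def x2_def\<close>)
  have t2: "tag q m {0, b'} x2 y" by (rule tag_cong[OF _ t0]) (use l in \<open>auto simp: ag_def x2_def\<close>)
  have "tag q m {0, l} x2 y \<or> tag q m {l, b'} x2 y" by (rule alpha_split[OF t2]) (simp add: x2_def pa)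
  thus ?thesis
  proof
    assume "tag q m {l, b'} x2 y"
    hence "Steps (x2, y) (Rv \<alpha> y, y)" using case1_to_R[OF pa p2] l b' by blast
    thus ?thesis using s2 by simp
  next
    assume t3: "tag q m {0, l} x2 y"
    define x3 where "x3 = x2(b' := tt (y b'))"
    have p3: "x3 \<in> points n" using p2 b' by (auto simp: x3_def points_def)
    have s3: "Steps (x2, y) (x3, y)"
      by (rule free_reach[OF t3 _ p2 p3]) (use b' l in \<open>auto simp: ag_def x3_def\<close>)
    have t4: "tag q m {l, b'} x3 y" by (rule tag_alpha[OF pa]) (use l in \<open>auto simp: x3_def x2_def\<close>)
    have "Steps (x3, y) (Rv \<alpha> y, y)" using case1_to_R[OF pa p3] l b' t4 by blast
    thus ?thesis using s2 s3 by simp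
  qed
qed

lemma exists_tag_pair:
  assumes pr: "prim q m (x a)" and a: "a < n" and ns: "\<not> simJ q {0..<n} y x"
  shows "\<exists>b<n. b \<noteq> a \<and> tag q m {a, b} x (y::nat \<Rightarrow> 'a)"
proof (cases "\<exists>k. fr q k (y a) = x a")
  case False
  define b where "b = (if a = 0 then 1 else (0::nat))"
  have b: "b < n" "b \<noteq> a" using n3 by (auto simp: b_def)
  have "\<not> simJ q {a, b} y x" using False by (auto simp: simJ_def ag_def frob_fr)
  moreover have "fullJ q m {a, b} x" using prim_full[of x a, OF pr] by simp
  ultimately show ?thesis using b by (auto simp: tag_def)
next
  case True
  then obtain k where k: "fr q k (y a) = x a" by blast
  have "\<not> ag {0..<n} (frob_vec q k y) x" using ns by (auto simp: simJ_def)
  then obtain b where b: "b < n" "fr q k (y b) \<noteq> x b" by (auto simp: ag_def frob_fr)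
  have ba: "b \<noteq> a" using b k by auto
  have "\<not> simJ q {a, b} y x"
  proof
    assume "simJ q {a, b} y x"
    then obtain k' where k': "fr q k' (y a) = x a" "fr q k' (y b) = x b"
      by (auto simp: simJ_def ag_def frob_fr)
    have "k mod m = k' mod m" using prim_mod[OF pr k k'(1)] .
    hence "fr q k (y b) = fr q k' (y b)" by (metis fr_mod)
    thus False using b k' by simp
  qed
  moreover have "fullJ q m {a, b} x" using prim_full[of x a, OF pr] by simp
  ultimately show ?thesis using b ba by (auto simp: tag_def)
qed

end

lemma mod_shift: "0 < (m::nat) \<Longrightarrow> i < m \<Longrightarrow> ((i + (m - k mod m)) mod m + k) mod m = i"
proof -
  assume m: "0 < m" and i: "i < m"
  have "((i + (m - k mod m)) mod m + k) mod m = (i + (m - k mod m) + k) mod m" by (simp add: mod_add_left_eq)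
  also have "i + (m - k mod m) + k = i + m + m * (k div m)"
  proof -
    have "k mod m < m" using m by simp
    moreover have "k = k mod m + m * (k div m)" by simp
    ultimately show ?thesis by linarith
  qed
  also have "(i + m + m * (k div m)) mod m = i" using i by simp
  finally show ?thesis .
qed

context FFn
begin

lemma frob_back: "i < m \<Longrightarrow> frob_vec q ((i + (m - k mod m)) mod m) (frob_vec q k v) = frob_vec q i (v::nat \<Rightarrow> 'a)"
  by (metis frob_comp frob_mod mod_shift m1 less_le_trans zero_less_one)

lemma orbit_frob: "orbit q m (frob_vec q k v) = orbit q m (v::nat \<Rightarrow> 'a)"
proof
  show "orbit q m (frob_vec q k v) \<subseteq> orbit q m v"
  proof
    fix w assume "w \<in> orbit q m (frob_vec q k v)"
    then obtain i where "i < m" "w = frob_vec q i (frob_vec q k v)" by (auto simp: orbit_def)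
    hence "w = frob_vec q ((i + k) mod m) v" by (metis frob_comp frob_mod)
    moreover have "(i + k) mod m < m" using m1 by simp
    ultimately show "w \<in> orbit q m v" by (auto simp: orbit_def)
  qed
  show "orbit q m v \<subseteq> orbit q m (frob_vec q k v)"
  proof
    fix w assume "w \<in> orbit q m v"
    then obtain i where i: "i < m" "w = frob_vec q i v" by (auto simp: orbit_def)
    hence "w = frob_vec q ((i + (m - k mod m)) mod m) (frob_vec q k v)" using frob_back by simp
    moreover have "(i + (m - k mod m)) mod m < m" using m1 by simp
    ultimately show "w \<in> orbit q m (frob_vec q k v)" by (auto simp: orbit_def)
  qed
qed

lemma simJ_sym: "simJ q J y x \<Longrightarrow> simJ q J x (y::nat \<Rightarrow> 'a)"
proof -
  assume "simJ q J y x"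
  then obtain k where k: "ag J (frob_vec q k y) x" by (auto simp: simJ_def)
  define k' where "k' = m - k mod m"
  have "ag J (frob_vec q k' (frob_vec q k y)) (frob_vec q k' x)" by (rule ag_frob[OF k])
  moreover have "frob_vec q k' (frob_vec q k y) = y"
  proof -
    have "frob_vec q k' (frob_vec q k y) = frob_vec q (k' mod m) (frob_vec q k y)" by (rule frob_mod)
    also have "\<dots> = y" using frob_back[of 0 k y] m1 by (simp add: k'_def)
    finally show ?thesis .
  qed
  ultimately have "ag J y (frob_vec q k' x)" by simp
  thus ?thesis by (auto simp: simJ_def ag_def)
qed

lemma E_ag_back:
  assumes j: "j < n" and f: "fq_poly q ({0..<n} - {j}) f"
    and a: "ag {0..<n} (E j f v) (E j f w)"
  shows "ag {0..<n} v (w::nat \<Rightarrow> 'a)"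
proof -
  have g: "fq_poly q ({0..<n} - {j}) (\<lambda>v. - f v)" by (rule fq_poly_neg[OF f])
  have loc: "(\<lambda>v. - f v) (E j f v) = (\<lambda>v. - f v) (E j f w)"
    using fq_poly_local[OF g, of "E j f v" "E j f w"] a by (auto simp: ag_def)
  have "ag {0..<n} (E j (\<lambda>v. - f v) (E j f v)) (E j (\<lambda>v. - f v) (E j f w))"
    using a loc j by (auto simp: ag_def E_def)
  thus ?thesis by (simp add: E_inv[OF f])
qed

lemma Step_pres:
  assumes st: "Step q n (x, y) (x', y')"
  shows "(fullJ q m {0..<n} x \<longrightarrow> fullJ q m {0..<n} x') \<and> (fullJ q m {0..<n} y \<longrightarrow> fullJ q m {0..<n} y')
    \<and> (\<not> simJ q {0..<n} y x \<longrightarrow> \<not> simJ q {0..<n} y' (x'::nat \<Rightarrow> 'a))"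
proof -
  obtain j f where j: "j < n" and f: "fq_poly q ({0..<n} - {j}) f"
    and x': "x' = E j f x" and y': "y' = E j f y" using st unfolding Step_def by auto
  have fe: "frob_vec q k (E j f v) = E j f (frob_vec q k v)" for k v using E_frob[OF f] by simp
  have full: "fullJ q m {0..<n} v \<Longrightarrow> fullJ q m {0..<n} (E j f v)" for v
    unfolding fullJ_def using E_ag_back[OF j f] fe by metis
  have sim: "\<not> simJ q {0..<n} y x \<Longrightarrow> \<not> simJ q {0..<n} (E j f y) (E j f x)"
    unfolding simJ_def using E_ag_back[OF j f] fe by metis
  show ?thesis using full sim x' y' by blast
qed

definition c0 :: "'a \<Rightarrow> nat \<Rightarrow> 'a" where "c0 \<alpha> = (\<lambda>i. if i = 0 then \<alpha> else 0)"
definition c1 :: "'a \<Rightarrow> nat \<Rightarrow> 'a" where "c1 \<alpha> = (\<lambda>i. if i = 0 then \<alpha> else if i = 1 \<or> i = 2 then 1 else 0)"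

lemma tt_tt: "z = 0 \<or> z = 1 \<Longrightarrow> tt (tt z) = (z::'a)"
  by (auto simp: tt_def)

lemma final_conn:
  assumes pa: "prim q m \<alpha>" and A: "A = Rv \<alpha> y" and B: "B = Rv \<alpha> A"
  shows "Steps (A, B) (c0 \<alpha>, c1 \<alpha>)"
proof -
  have pA: "A \<in> points n" and pB: "B \<in> points n" using A B Rv_points by auto
  have A0: "A 0 = \<alpha>" "B 0 = \<alpha>" using A B by (simp_all add: Rv_def)
  have B1: "B 1 = tt (A 1)" "A 1 = 0 \<or> A 1 = 1" using A B tt_01 by (simp_all add: Rv_def)
  define A' where "A' = (\<lambda>i::nat. if i = 0 then \<alpha> else if i = 1 then A 1 else 0)"
  define B' where "B' = (\<lambda>i::nat. if i = 0 then \<alpha> else if i = 1 then B 1 else if i = 2 then 1 else 0)"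
  have pA': "A' \<in> points n" and pB': "B' \<in> points n" using n3 by (auto simp: A'_def B'_def points_def)
  have t1: "tag q m {0, 1} A B" by (rule tag_alpha[OF pa]) (use A0 B1 tt_tt in auto)
  have s1: "Steps (A, B) (A', B)"
    by (rule free_reach[OF t1 _ pA pA']) (use n3 A0 in \<open>auto simp: ag_def A'_def\<close>)
  have t2: "tag q m {0, 1} B A'" by (rule tag_alpha[OF pa]) (use A0 B1 in \<open>auto simp: A'_def\<close>)
  have "Steps (B, A') (B', A')"
    by (rule free_reach[OF t2 _ pB pB']) (use n3 A0 in \<open>auto simp: ag_def B'_def\<close>)
  hence s2: "Steps (A', B) (A', B')" by (rule Steps_swap)
  have t3: "tag q m {0, 2} A' B'" by (rule tag_alpha[OF pa]) (auto simp: A'_def B'_def tt_def)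
  have pc0: "c0 \<alpha> \<in> points n" and pc1: "c1 \<alpha> \<in> points n" using n3 by (auto simp: c0_def c1_def points_def)
  have s3: "Steps (A', B') (c0 \<alpha>, B')"
    by (rule free_reach[OF t3 _ pA' pc0]) (use n3 in \<open>auto simp: ag_def A'_def c0_def\<close>)
  have t4: "tag q m {0, 2} B' (c0 \<alpha>)" by (rule tag_alpha[OF pa]) (auto simp: B'_def c0_def tt_def)
  have "Steps (B', c0 \<alpha>) (c1 \<alpha>, c0 \<alpha>)"
    by (rule free_reach[OF t4 _ pB' pc1]) (use n3 in \<open>auto simp: ag_def B'_def c1_def\<close>)
  hence s4: "Steps (c0 \<alpha>, B') (c0 \<alpha>, c1 \<alpha>)" by (rule Steps_swap)
  show ?thesis using s1 s2 s3 s4 by (meson rtranclp_trans)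
qed

lemma chain:
  assumes pa: "prim q m \<alpha>" and r: "r \<in> points n" "fullJ q m {0..<n} r"
    and u: "u \<in> points n" "fullJ q m {0..<n} u" and ns: "\<not> simJ q {0..<n} u (r::nat \<Rightarrow> 'a)"
  shows "Steps (r, u) (c0 \<alpha>, c1 \<alpha>)"
proof -
  have n0: "0 < n" and n1: "1 < n" using n3 by auto
  obtain f where f: "fq_poly q ({0..<n} - {0}) f" and pf: "prim q m (r 0 + f r)"
    using global_step[OF r(2) n0] by blast
  define x where "x = E 0 f r"
  define y where "y = E 0 f u"
  have st1: "Step q n (r, u) (x, y)" unfolding Step_def x_def y_def using n0 f by auto
  have px: "x \<in> points n" and py: "y \<in> points n" using E_points[OF n0] r u by (auto simp: x_def y_def)
  have x0: "prim q m (x 0)" using pf by (simp add: x_def E_def)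
  have fy: "fullJ q m {0..<n} y" and nsxy: "\<not> simJ q {0..<n} y x" using Step_pres[OF st1] u ns by auto
  obtain g where g: "fq_poly q ({0..<n} - {1}) g" and pg: "prim q m (y 1 + g y)"
    using global_step[OF fy n1] by blast
  define x' where "x' = E 1 g x"
  define y' where "y' = E 1 g y"
  have st2: "Step q n (x, y) (x', y')" unfolding Step_def x'_def y'_def using n1 g by auto
  have px': "x' \<in> points n" and py': "y' \<in> points n" using E_points[OF n1] px py by (auto simp: x'_def y'_def)
  have x'0: "prim q m (x' 0)" using x0 by (simp add: x'_def E_def)
  have y'1: "prim q m (y' 1)" using pg by (simp add: y'_def E_def)
  have ns': "\<not> simJ q {0..<n} y' x'" using Step_pres[OF st2] nsxy by auto
  obtain b where b: "b < n" "b \<noteq> 0" "tag q m {0, b} x' y'" using exists_tag_pair[OF x'0 n0 ns'] by blast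
  define A where "A = Rv \<alpha> y'"
  have s3: "Steps (x', y') (A, y')" unfolding A_def by (rule pair_to_R[OF pa px' n0 b(1) b(2)[symmetric] b(3)])
  have pA: "A \<in> points n" using Rv_points by (simp add: A_def)
  have tA: "tag q m {0, 1} A y'" unfolding A_def by (rule tag_alpha[OF pa]) (auto simp: Rv_def)
  hence "\<not> simJ q {0, 1} y' A" by (simp add: tag_def)
  hence "\<not> simJ q {0..<n} y' A" by (rule simJ_mono) (use n1 in auto)
  hence nsA: "\<not> simJ q {0..<n} A y'" using simJ_sym by blast
  obtain b' where b': "b' < n" "b' \<noteq> 1" "tag q m {1, b'} y' A" using exists_tag_pair[OF y'1 n1 nsA] by blast
  define B where "B = Rv \<alpha> A"
  have "Steps (y', A) (B, A)" unfolding B_def by (rule pair_to_R[OF pa py' n1 b'(1) b'(2)[symmetric] b'(3)])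
  hence s4: "Steps (A, y') (A, B)" by (rule Steps_swap)
  have s5: "Steps (A, B) (c0 \<alpha>, c1 \<alpha>)" by (rule final_conn[OF pa A_def B_def])
  have "Steps (r, u) (x', y')" using st1 st2 by simp
  thus ?thesis using s3 s4 s5 by (meson rtranclp_trans)
qed

end

context FFn
begin

lemma bigX_full:
  assumes "v \<in> bigX q m n"
  shows "v \<in> points n \<and> fullJ q m {0..<n} (v::nat \<Rightarrow> 'a)"
proof -
  have pv: "v \<in> points n" and c: "card (orbit q m v) = m" using assms by (auto simp: bigX_def)
  have o: "orbit q m v = (\<lambda>k. frob_vec q k v) ` {..<m}" by (auto simp: orbit_def)
  have inj: "inj_on (\<lambda>k. frob_vec q k v) {..<m}"
    using c o by (intro eq_card_imp_inj_on) auto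
  have "fullJ q m {0..<n} v"
    unfolding fullJ_def
  proof (intro allI impI notI)
    fix k assume k: "0 < k \<and> k < m" and a: "ag {0..<n} (frob_vec q k v) v"
    have "frob_vec q k v = v" using points_eq[OF frob_points[OF pv] pv] a by (auto simp: ag_def)
    hence "frob_vec q k v = frob_vec q 0 v" by simp
    moreover have "k \<in> {..<m}" "0 \<in> {..<m}" using k by auto
    ultimately have "k = 0" using inj_onD[OF inj] by blast
    thus False using k by simp
  qed
  thus ?thesis using pv by simp
qed

lemma orbit_nsim:
  assumes "v \<in> points n" "w \<in> points n" "orbit q m v \<noteq> orbit q m w"
  shows "\<not> simJ q {0..<n} w (v::nat \<Rightarrow> 'a)"
proof
  assume "simJ q {0..<n} w v"
  then obtain k where "ag {0..<n} (frob_vec q k w) v" by (auto simp: simJ_def)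
  hence "frob_vec q k w = v" using points_eq[OF frob_points[OF assms(2)] assms(1)] by (auto simp: ag_def)
  hence "orbit q m v = orbit q m w" using orbit_frob by metis
  thus False using assms(3) by simp
qed

lemma main_FFn:
  assumes "s \<in> bigX q m n" "r \<in> bigX q m n" "u \<in> bigX q m n"
    and "orbit q m s \<noteq> orbit q m u" "orbit q m r \<noteq> orbit q m u"
  shows "\<exists>F \<in> tame q n. F ` orbit q m r = orbit q m s \<and> F ` orbit q m u = orbit q m (u::nat \<Rightarrow> 'a)"
proof -
  have s: "s \<in> points n" "fullJ q m {0..<n} s" using bigX_full[OF assms(1)] by auto
  have r: "r \<in> points n" "fullJ q m {0..<n} r" using bigX_full[OF assms(2)] by auto
  have u: "u \<in> points n" "fullJ q m {0..<n} u" using bigX_full[OF assms(3)] by auto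
  have n0: "0 < n" using n3 by simp
  obtain f where "fq_poly q ({0..<n} - {0}) f" and pa: "prim q m (r 0 + f r)"
    using global_step[OF r(2) n0] by blast
  define \<alpha> where "\<alpha> = r 0 + f r"
  have pa: "prim q m \<alpha>" using pa by (simp add: \<alpha>_def)
  have ns_r: "\<not> simJ q {0..<n} u r" by (rule orbit_nsim[OF r(1) u(1) assms(5)])
  have ns_s: "\<not> simJ q {0..<n} u s" by (rule orbit_nsim[OF s(1) u(1) assms(4)])
  have c1: "Steps (r, u) (c0 \<alpha>, c1 \<alpha>)" by (rule chain[OF pa r u ns_r])
  have c2: "Steps (s, u) (c0 \<alpha>, c1 \<alpha>)" by (rule chain[OF pa s u ns_s])
  have "Steps (r, u) (s, u)" using c1 Steps_sym[OF c2] by (meson rtranclp_trans)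
  then obtain F where F: "F \<in> tame q n" "F r = s" "F u = u"
    using Steps_tame[of n "(r, u)" "(s, u)"] r u by auto
  show ?thesis using tame_orbit[OF F(1) r(1)] tame_orbit[OF F(1) u(1)] F by auto
qed

end

theorem mainTheorem14:
  fixes q m n :: nat and s r u :: "nat \<Rightarrow> 'a::{field,finite}"
  assumes "\<exists>p k. prime p \<and> k > 0 \<and> q = p ^ k"
    and "m \<ge> 1"
    and "card (UNIV :: 'a set) = q ^ m"
    and "n \<ge> 3"
    and "s \<in> bigX q m n" and "r \<in> bigX q m n" and "u \<in> bigX q m n"
    and "orbit q m s \<noteq> orbit q m r" and "orbit q m s \<noteq> orbit q m u"
    and "orbit q m r \<noteq> orbit q m u"
  shows "\<exists>F \<in> tame q n. F ` orbit q m r = orbit q m s \<and> F ` orbit q m u = orbit q m u"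
proof -
  interpret FFn q m "TYPE('a)" n
    by unfold_locales (use assms in auto)
  show ?thesis by (rule main_FFn) (use assms in auto)
qed

end
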